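(* Let $n\ge 4$ and let $T$ be a triangulation of a regular $n$-gon with edges labeled $1,\dots,n$ in cyclic order, such that every triangle of $T$ has at least one side that is an edge of the $n$-gon. Then $d_T=1$.
   Context: For a finite set $A$ with $|A|\ge 3$, $M_{0,A}$ denotes the moduli space of configurations of $|A|$ distinct points on $\mathbb{P}^1_{\mathbb{C}}$ labeled by $A$, modulo Möbius transformations; it has dimension $|A|-3$, and for $S\subseteq A$ with $|S|\ge3$ there is a forgetful map $M_{0,A}\to M_{0,S}$. For $|S|=4$, $M_{0,S}\cong\mathbb{P}^1\setminus\{0,1,\infty\}$ via the cross-ratio. A diagonal $D$ of the $n$-gon touches exactly four edges (the two edges at each endpoint of $D$); let $S_D\subseteq[n]$ be this 4-element set. A triangulation $T$ is a choice of $n-3$ pairwise non-crossing diagonals, and $d_T$ is the degree (cardinality of a general fiber, $0$ if not dominant) of the product of forgetful maps $\pi_T:M_{0,[n]}\to\prod_{D\in T}M_{0,S_D}$. *)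

theory Defs
  imports Complex_Main
begin

text \<open>A point of P^1(C) is represented by a nonzero vector in C^2 (up to scaling).
  Two points coincide iff their 2x2 determinant vanishes.\<close>

definition det2 :: "complex \<times> complex \<Rightarrow> complex \<times> complex \<Rightarrow> complex" where
  "det2 u v = fst u * snd v - snd u * fst v"

definition conf :: "nat \<Rightarrow> (nat \<Rightarrow> complex \<times> complex) set" where
  "conf n = {p. (\<forall>i\<in>{1..n}. p i \<noteq> (0,0)) \<and>
                (\<forall>i\<in>{1..n}. \<forall>j\<in>{1..n}. i \<noteq> j \<longrightarrow> det2 (p i) (p j) \<noteq> 0)}"

text \<open>Two configurations are equivalent iff they differ by a Moebius transformation
  (an invertible 2x2 matrix acting on homogeneous coordinates, up to rescaling each point).\<close>

definition mobius_equiv :: "nat \<Rightarrow> ((nat \<Rightarrow> complex \<times> complex) \<times> (nat \<Rightarrow> complex \<times> complex)) set" where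
  "mobius_equiv n = {(p, q). p \<in> conf n \<and> q \<in> conf n \<and>
     (\<exists>a b c d :: complex. a * d - b * c \<noteq> 0 \<and>
        (\<exists>l :: nat \<Rightarrow> complex. \<forall>i\<in>{1..n}. l i \<noteq> 0 \<and>
            q i = (l i * (a * fst (p i) + b * snd (p i)), l i * (c * fst (p i) + d * snd (p i)))))}"

definition M0 :: "nat \<Rightarrow> (nat \<Rightarrow> complex \<times> complex) set set" where
  "M0 n = conf n // mobius_equiv n"

text \<open>Cross-ratio of four labelled points; it identifies M_{0,{a<b<c<d}} with P^1 minus {0,1,inf}.\<close>

definition crossratio :: "(nat \<Rightarrow> complex \<times> complex) \<Rightarrow> nat \<Rightarrow> nat \<Rightarrow> nat \<Rightarrow> nat \<Rightarrow> complex" where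
  "crossratio p a b c d =
     (det2 (p a) (p b) * det2 (p c) (p d)) / (det2 (p a) (p c) * det2 (p b) (p d))"

text \<open>Forgetful map to M_{0,S} for a 4-element set S of labels (listed increasingly).\<close>

definition cr_set :: "(nat \<Rightarrow> complex \<times> complex) \<Rightarrow> nat set \<Rightarrow> complex" where
  "cr_set p S = (case sorted_list_of_set S of [a, b, c, d] \<Rightarrow> crossratio p a b c d | _ \<Rightarrow> 0)"

text \<open>Vertices are 1..n in cyclic order; edge i joins vertex i and vertex i+1 (edge n joins n and 1).
  So the two edges at vertex u are edge (u-1) (edge n if u = 1) and edge u.\<close>

definition prev_edge :: "nat \<Rightarrow> nat \<Rightarrow> nat" where
  "prev_edge n u = (if u = 1 then n else u - 1)"

definition is_diagonal :: "nat \<Rightarrow> nat \<times> nat \<Rightarrow> bool" where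
  "is_diagonal n D = (case D of (u, v) \<Rightarrow>
      1 \<le> u \<and> u + 2 \<le> v \<and> v \<le> n \<and> \<not> (u = 1 \<and> v = n))"

text \<open>The four edges touched by a diagonal.\<close>

definition S_D :: "nat \<Rightarrow> nat \<times> nat \<Rightarrow> nat set" where
  "S_D n D = (case D of (u, v) \<Rightarrow> {prev_edge n u, u, prev_edge n v, v})"

definition crosses :: "nat \<times> nat \<Rightarrow> nat \<times> nat \<Rightarrow> bool" where
  "crosses D E = (case D of (a, b) \<Rightarrow> case E of (c, d) \<Rightarrow>
      (a < c \<and> c < b \<and> b < d) \<or> (c < a \<and> a < d \<and> d < b))"

definition is_triangulation :: "nat \<Rightarrow> (nat \<times> nat) set \<Rightarrow> bool" where
  "is_triangulation n T = (T \<subseteq> {D. is_diagonal n D} \<and> card T = n - 3 \<and>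
      (\<forall>D\<in>T. \<forall>E\<in>T. \<not> crosses D E))"

definition is_side :: "nat \<Rightarrow> nat \<Rightarrow> nat \<Rightarrow> bool" where
  "is_side n u v = ((1 \<le> u \<and> v = u + 1 \<and> v \<le> n) \<or> (u = 1 \<and> v = n))"

definition joined :: "nat \<Rightarrow> (nat \<times> nat) set \<Rightarrow> nat \<Rightarrow> nat \<Rightarrow> bool" where
  "joined n T u v = (is_side n u v \<or> (u, v) \<in> T)"

text \<open>Triangles of the triangulation: triples a<b<c of vertices pairwise joined by sides or
  diagonals of T (for a convex polygon these are exactly the faces).\<close>

definition triangles :: "nat \<Rightarrow> (nat \<times> nat) set \<Rightarrow> (nat \<times> nat \<times> nat) set" where
  "triangles n T = {(a, b, c). 1 \<le> a \<and> a < b \<and> b < c \<and> c \<le> n \<and>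
      joined n T a b \<and> joined n T b c \<and> joined n T a c}"

definition piT :: "nat \<Rightarrow> (nat \<times> nat) set \<Rightarrow> (nat \<Rightarrow> complex \<times> complex) \<Rightarrow> (nat \<times> nat \<Rightarrow> complex)" where
  "piT n T p = (\<lambda>D. if D \<in> T then cr_set p (S_D n D) else 0)"

text \<open>The target: product over D in T of M_{0,S_D} = C - {0,1}, coordinates indexed by T.\<close>

definition target :: "(nat \<times> nat) set \<Rightarrow> (nat \<times> nat \<Rightarrow> complex) set" where
  "target T = {y. (\<forall>D\<in>T. y D \<noteq> 0 \<and> y D \<noteq> 1) \<and> (\<forall>D. D \<notin> T \<longrightarrow> y D = 0)}"

definition fiber :: "nat \<Rightarrow> (nat \<times> nat) set \<Rightarrow> (nat \<times> nat \<Rightarrow> complex) \<Rightarrow> (nat \<Rightarrow> complex \<times> complex) set set" where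
  "fiber n T y = {C \<in> M0 n. \<exists>p\<in>C. piT n T p = y}"

inductive_set polyfun :: "(('i \<Rightarrow> complex) \<Rightarrow> complex) set" where
  pf_const: "(\<lambda>y. c) \<in> polyfun"
| pf_var: "(\<lambda>y. y i) \<in> polyfun"
| pf_add: "f \<in> polyfun \<Longrightarrow> g \<in> polyfun \<Longrightarrow> (\<lambda>y. f y + g y) \<in> polyfun"
| pf_mult: "f \<in> polyfun \<Longrightarrow> g \<in> polyfun \<Longrightarrow> (\<lambda>y. f y * g y) \<in> polyfun"

text \<open>A property holds for a general point of the target: it holds on a nonempty Zariski-open
  subset, namely outside the zero locus of a polynomial not vanishing identically on the target.\<close>

definition generically :: "(nat \<times> nat) set \<Rightarrow> ((nat \<times> nat \<Rightarrow> complex) \<Rightarrow> bool) \<Rightarrow> bool" where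
  "generically T P = (\<exists>f\<in>polyfun. (\<exists>y\<in>target T. f y \<noteq> 0) \<and>
      (\<forall>y\<in>target T. f y \<noteq> 0 \<longrightarrow> P y))"

text \<open>d_T: cardinality of a general fiber (0 if pi_T is not dominant).\<close>

definition degree_T :: "nat \<Rightarrow> (nat \<times> nat) set \<Rightarrow> nat" where
  "degree_T n T = (THE d. generically T (\<lambda>y. card (fiber n T y) = d))"

end

theory Submission
  imports Defs "HOL-Computational_Algebra.Polynomial"
begin

definition adjV :: "nat set \<Rightarrow> nat \<Rightarrow> nat \<Rightarrow> bool" where
  "adjV V a b = (a \<in> V \<and> b \<in> V \<and> a < b \<and> ((\<forall>c\<in>V. \<not>(a<c \<and> c<b)) \<or> (a = Min V \<and> b = Max V)))"

definition diagV :: "nat set \<Rightarrow> nat \<times> nat \<Rightarrow> bool" where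
  "diagV V D = (fst D \<in> V \<and> snd D \<in> V \<and> fst D < snd D \<and> \<not> adjV V (fst D) (snd D))"

definition ncr :: "(nat \<times> nat) set \<Rightarrow> bool" where
  "ncr S = (\<forall>D\<in>S. \<forall>E\<in>S. \<not> crosses D E)"

definition joinV :: "nat set \<Rightarrow> (nat\<times>nat) set \<Rightarrow> nat \<Rightarrow> nat \<Rightarrow> bool" where
  "joinV V S a b = (adjV V a b \<or> (a,b) \<in> S)"

definition apexV :: "nat set \<Rightarrow> (nat\<times>nat) set \<Rightarrow> nat \<Rightarrow> nat \<Rightarrow> bool" where
  "apexV V S p q = (\<exists>x\<in>V. x \<noteq> p \<and> x \<noteq> q \<and> joinV V S (min p x) (max p x) \<and> joinV V S (min x q) (max x q))"

definition V1 :: "nat set \<Rightarrow> nat \<Rightarrow> nat \<Rightarrow> nat set" where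
  "V1 V a b = {x\<in>V. a \<le> x \<and> x \<le> b}"
definition V2 :: "nat set \<Rightarrow> nat \<Rightarrow> nat \<Rightarrow> nat set" where
  "V2 V a b = {x\<in>V. x \<le> a \<or> b \<le> x}"

lemma V1_Min: assumes "finite V" "a \<in> V" "b\<in>V" "a<b" shows "Min (V1 V a b) = a" "Max (V1 V a b) = b"
  using assms by (auto simp: V1_def intro!: Min_eqI Max_eqI)

lemma V2_Min: assumes "finite V" "a \<in> V" "b\<in>V" "a<b" shows "Min (V2 V a b) = Min V" "Max (V2 V a b) = Max V"
proof -
  have ne: "V \<noteq> {}" using assms by auto
  have "Min V \<le> a" using assms by auto
  moreover have "Min V \<in> V" using Min_in[OF assms(1) ne] .
  ultimately show "Min (V2 V a b) = Min V" using assms by (intro Min_eqI) (auto simp: V2_def)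
  have "Max V \<ge> b" using assms by auto
  moreover have "Max V \<in> V" using Max_in[OF assms(1) ne] .
  ultimately show "Max (V2 V a b) = Max V" using assms by (intro Max_eqI) (auto simp: V2_def)
qed

lemma split_card:
  assumes "finite V" "diagV V (a,b)"
  shows "card (V1 V a b) + card (V2 V a b) = card V + 2"
    "3 \<le> card (V1 V a b)" "3 \<le> card (V2 V a b)"
proof -
  have ab: "a \<in> V" "b \<in> V" "a < b" "\<not> adjV V a b" using assms by (auto simp: diagV_def)
  have U: "V1 V a b \<union> V2 V a b = V" by (auto simp: V1_def V2_def)
  have I: "V1 V a b \<inter> V2 V a b = {a,b}" using ab by (auto simp: V1_def V2_def)
  have f1: "finite (V1 V a b)" "finite (V2 V a b)" using assms by (auto simp: V1_def V2_def)
  show "card (V1 V a b) + card (V2 V a b) = card V + 2"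
    using card_Un_Int[OF f1] U I ab by simp
  obtain c where c: "c \<in> V" "a < c" "c < b" using ab(4) ab by (auto simp: adjV_def)
  have "{a,c,b} \<subseteq> V1 V a b" using ab c by (auto simp: V1_def)
  from card_mono[OF f1(1) this] show "3 \<le> card (V1 V a b)" using c by auto
  have "a \<noteq> Min V \<or> b \<noteq> Max V" using ab by (auto simp: adjV_def)
  then obtain d where d: "d \<in> V" "d < a \<or> b < d"
  proof
    assume "a \<noteq> Min V" then have "Min V < a" using ab assms(1) by (metis Min_le le_neq_implies_less)
    then show ?thesis using that Min_in[OF assms(1)] ab by auto
  next
    assume "b \<noteq> Max V" then have "b < Max V" using ab assms(1) by (metis Max_ge le_neq_implies_less)
    then show ?thesis using that Max_in[OF assms(1)] ab by auto
  qed
  have "{a,d,b} \<subseteq> V2 V a b" using ab d by (auto simp: V2_def)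
  from card_mono[OF f1(2) this] show "3 \<le> card (V2 V a b)" using d ab by auto
qed

lemma adj_V1:
  assumes "finite V" "a\<in>V" "b\<in>V" "a<b" "adjV (V1 V a b) c d"
  shows "adjV V c d \<or> (c,d) = (a,b)"
proof -
  have m: "Min (V1 V a b) = a" "Max (V1 V a b) = b" using V1_Min[OF assms(1-4)] by auto
  have cd: "c \<in> V" "d \<in> V" "c < d" "a \<le> c" "d \<le> b"
    using assms(5) by (auto simp: adjV_def V1_def)
  consider "\<forall>e\<in>V1 V a b. \<not>(c<e \<and> e<d)" | "c = a \<and> d = b" using assms(5) m by (auto simp: adjV_def)
  then show ?thesis
  proof cases
    case 1
    then have "\<forall>e\<in>V. \<not>(c<e \<and> e<d)" using cd by (auto simp: V1_def)
    then show ?thesis using cd by (auto simp: adjV_def)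
  qed auto
qed

lemma adj_V2:
  assumes "finite V" "a\<in>V" "b\<in>V" "a<b" "adjV (V2 V a b) c d"
  shows "adjV V c d \<or> (c,d) = (a,b)"
proof -
  have m: "Min (V2 V a b) = Min V" "Max (V2 V a b) = Max V" using V2_Min[OF assms(1-4)] by auto
  have cd: "c \<in> V" "d \<in> V" "c < d" "c \<le> a \<or> b \<le> c" "d \<le> a \<or> b \<le> d"
    using assms(5) by (auto simp: adjV_def V2_def)
  consider "\<forall>e\<in>V2 V a b. \<not>(c<e \<and> e<d)" | "c = Min V \<and> d = Max V" using assms(5) m by (auto simp: adjV_def)
  then show ?thesis
  proof cases
    case 1
    show ?thesis
    proof (cases "d \<le> a \<or> b \<le> c")
      case True
      then have "\<forall>e\<in>V. \<not>(c<e \<and> e<d)" using 1 by (auto simp: V2_def)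
      then show ?thesis using cd by (auto simp: adjV_def)
    next
      case False
      then have "c \<le> a" "b \<le> d" using cd by auto
      moreover have "\<not> (c < a)" using 1 assms(2,4) \<open>b \<le> d\<close> by (auto simp: V2_def)
      moreover have "\<not> (b < d)" using 1 assms(3,4) \<open>c \<le> a\<close> by (auto simp: V2_def)
      ultimately show ?thesis by auto
    qed
  next
    case 2 then show ?thesis using cd by (auto simp: adjV_def)
  qed
qed

lemma ncr_sides:
  assumes "\<not> crosses (a,b) (c,d)" "c < d" "a < b"
  shows "(a \<le> c \<and> d \<le> b) \<or> ((c \<le> a \<or> b \<le> c) \<and> (d \<le> a \<or> b \<le> d))"
  using assms by (auto simp: crosses_def)

lemma split_S:
  assumes "finite V" "(a,b) \<in> S" "S \<subseteq> Collect (diagV V)" "ncr S"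
  defines "S1 \<equiv> {E\<in>S-{(a,b)}. fst E \<in> V1 V a b \<and> snd E \<in> V1 V a b}"
  defines "S2 \<equiv> {E\<in>S-{(a,b)}. fst E \<in> V2 V a b \<and> snd E \<in> V2 V a b}"
  shows "S = insert (a,b) (S1 \<union> S2)" "S1 \<inter> S2 = {}" "(a,b) \<notin> S1 \<union> S2"
    "S1 \<subseteq> Collect (diagV (V1 V a b))" "S2 \<subseteq> Collect (diagV (V2 V a b))"
    "ncr S1" "ncr S2" "S1 \<subseteq> S" "S2 \<subseteq> S"
proof -
  have ab: "a \<in> V" "b \<in> V" "a < b" using assms(2,3) by (auto simp: diagV_def)
  show "S = insert (a,b) (S1 \<union> S2)"
  proof (intro equalityI subsetI)
    fix E assume E: "E \<in> S"
    obtain c d where [simp]: "E = (c,d)" by (cases E)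
    have cd: "c \<in> V" "d \<in> V" "c < d" using E assms(3) by (auto simp: diagV_def)
    have "\<not> crosses (a,b) (c,d)" using E assms(2,4) by (auto simp: ncr_def)
    from ncr_sides[OF this cd(3) ab(3)] show "E \<in> insert (a,b) (S1 \<union> S2)"
      using E cd by (auto simp: S1_def S2_def V1_def V2_def)
  qed (auto simp: S1_def S2_def assms(2))
  show "S1 \<inter> S2 = {}"
  proof (rule ccontr)
    assume "S1 \<inter> S2 \<noteq> {}"
    then obtain c d where "(c,d) \<in> S1" "(c,d) \<in> S2" by auto
    moreover then have "c < d" using assms(3) by (auto simp: S1_def diagV_def)
    ultimately show False using ab by (auto simp: S1_def S2_def V1_def V2_def)
  qed
  show "(a,b) \<notin> S1 \<union> S2" by (auto simp: S1_def S2_def)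
  show "S1 \<subseteq> Collect (diagV (V1 V a b))"
  proof
    fix E assume E: "E \<in> S1"
    obtain c d where [simp]: "E = (c,d)" by (cases E)
    have "diagV V (c,d)" "(c,d) \<noteq> (a,b)" using E assms(3) by (auto simp: S1_def)
    then show "E \<in> Collect (diagV (V1 V a b))" using E adj_V1[OF assms(1) ab, of c d]
      by (auto simp: diagV_def S1_def)
  qed
  show "S2 \<subseteq> Collect (diagV (V2 V a b))"
  proof
    fix E assume E: "E \<in> S2"
    obtain c d where [simp]: "E = (c,d)" by (cases E)
    have "diagV V (c,d)" "(c,d) \<noteq> (a,b)" using E assms(3) by (auto simp: S2_def)
    then show "E \<in> Collect (diagV (V2 V a b))" using E adj_V2[OF assms(1) ab, of c d]
      by (auto simp: diagV_def S2_def)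
  qed
  show "ncr S1" "ncr S2" using assms(4) by (auto simp: ncr_def S1_def S2_def)
  show "S1 \<subseteq> S" "S2 \<subseteq> S" by (auto simp: S1_def S2_def)
qed

lemma count_diag:
  assumes "finite V" "3 \<le> card V" "S \<subseteq> Collect (diagV V)" "ncr S"
  shows "card S + 3 \<le> card V"
  using assms
proof (induction "card V" arbitrary: V S rule: less_induct)
  case less
  show ?case
  proof (cases "S = {}")
    case True then show ?thesis using less by simp
  next
    case False
    then obtain a b where abS: "(a,b) \<in> S" by auto
    have dab: "diagV V (a,b)" using abS less.prems by auto
    note sp = split_S[OF less.prems(1) abS less.prems(3,4)]
    note sc = split_card[OF less.prems(1) dab]
    define S1 where "S1 = {E\<in>S-{(a,b)}. fst E \<in> V1 V a b \<and> snd E \<in> V1 V a b}"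
    define S2 where "S2 = {E\<in>S-{(a,b)}. fst E \<in> V2 V a b \<and> snd E \<in> V2 V a b}"
    have fin: "finite (V1 V a b)" "finite (V2 V a b)" using less.prems by (auto simp: V1_def V2_def)
    have c1: "card S1 + 3 \<le> card (V1 V a b)"
      using less.hyps[of "V1 V a b" S1] sc fin sp unfolding S1_def by auto
    have c2: "card S2 + 3 \<le> card (V2 V a b)"
      using less.hyps[of "V2 V a b" S2] sc fin sp unfolding S2_def by auto
    have "S1 \<subseteq> V1 V a b \<times> V1 V a b" "S2 \<subseteq> V2 V a b \<times> V2 V a b"
      unfolding S1_def S2_def by (auto simp: mem_Times_iff)
    then have fS: "finite S1" "finite S2" using fin by (auto intro: finite_subset)
    have "card S = 1 + card S1 + card S2"
      using sp(1-3) fS unfolding S1_def S2_def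
      by (metis (no_types, lifting) card_Un_disjoint card_insert_disjoint finite_UnI plus_1_eq_Suc add.assoc)
    then show ?thesis using c1 c2 sc by linarith
  qed
qed

lemma card3_adj:
  assumes "finite V" "card V = 3" "c \<in> V" "d \<in> V" "c < d"
  shows "adjV V c d"
proof (cases "\<forall>e\<in>V. \<not>(c<e \<and> e<d)")
  case True then show ?thesis using assms by (auto simp: adjV_def)
next
  case False
  then obtain e where e: "e \<in> V" "c < e" "e < d" by auto
  have "{c,e,d} \<subseteq> V" using e assms by auto
  moreover have "card {c,e,d} = 3" using e by auto
  ultimately have V: "V = {c,e,d}" using card_subset_eq[OF assms(1)] assms(2) by metis
  have "Min V = c" "Max V = d" unfolding V using e by (auto simp: min_def max_def)
  then show ?thesis using assms by (auto simp: adjV_def)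
qed

lemma adj_into:
  assumes "finite V" "a\<in>V" "b\<in>V" "a<b" "adjV V p q"
  shows "adjV (V1 V a b) p q \<or> adjV (V2 V a b) p q"
proof -
  have pq: "p \<in> V" "q \<in> V" "p < q" using assms(5) by (auto simp: adjV_def)
  consider "\<forall>e\<in>V. \<not>(p<e \<and> e<q)" | "p = Min V \<and> q = Max V" using assms(5) by (auto simp: adjV_def)
  then show ?thesis
  proof cases
    case 1
    show ?thesis
    proof (cases "a \<le> p \<and> q \<le> b")
      case True
      then show ?thesis using 1 pq by (auto simp: adjV_def V1_def)
    next
      case False
      have "(p \<le> a \<or> b \<le> p) \<and> (q \<le> a \<or> b \<le> q)"
      proof -
        have "\<not>(p < a \<and> a < q)" using 1 assms(2) by auto
        moreover have "\<not>(p < b \<and> b < q)" using 1 assms(3) by auto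
        ultimately show ?thesis using False pq assms(4) by linarith
      qed
      then show ?thesis using 1 pq by (auto simp: adjV_def V2_def)
    qed
  next
    case 2
    have "Min V \<le> a" "b \<le> Max V" using assms(1-3) by auto
    then have "adjV (V2 V a b) p q" using 2 V2_Min[OF assms(1-4)] pq
      by (auto simp: adjV_def V2_def)
    then show ?thesis ..
  qed
qed

lemma join_trans1:
  assumes "finite V" "(a,b)\<in>S" "diagV V (a,b)" "S' \<subseteq> S" "joinV (V1 V a b) S' c d"
  shows "joinV V S c d"
  using assms adj_V1[OF assms(1), of a b c d] by (auto simp: joinV_def diagV_def)

lemma join_trans2:
  assumes "finite V" "(a,b)\<in>S" "diagV V (a,b)" "S' \<subseteq> S" "joinV (V2 V a b) S' c d"
  shows "joinV V S c d"
  using assms adj_V2[OF assms(1), of a b c d] by (auto simp: joinV_def diagV_def)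

lemma strict_diag:
  assumes "finite V" "3 \<le> card V" "S \<subseteq> Collect (diagV V)" "ncr S" "adjV V p q" "\<not> apexV V S p q"
  shows "card S + 4 \<le> card V"
  using assms
proof (induction "card V" arbitrary: V S rule: less_induct)
  case less
  show ?case
  proof (cases "S = {}")
    case True
    have "card V \<noteq> 3"
    proof
      assume c3: "card V = 3"
      have pq: "p \<in> V" "q \<in> V" "p < q" using less.prems(5) by (auto simp: adjV_def)
      have "\<exists>r\<in>V. r \<noteq> p \<and> r \<noteq> q"
      proof (rule ccontr)
        assume "\<not> ?thesis"
        then have "V \<subseteq> {p,q}" by auto
        then have "card V \<le> card {p,q}" by (intro card_mono) auto
        also have "\<dots> \<le> 2" by (simp add: card_insert_if)
        finally have "card V \<le> 2" .
        with c3 show False by simp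
      qed
      then obtain r where r: "r \<in> V" "r \<noteq> p" "r \<noteq> q" by auto
      have "apexV V S p q" unfolding apexV_def joinV_def
        using r pq card3_adj[OF less.prems(1) c3] by (intro bexI[of _ r]) (auto simp: min_def max_def)
      with less.prems(6) show False by simp
    qed
    then show ?thesis using less True by simp
  next
    case False
    then obtain a b where abS: "(a,b) \<in> S" by auto
    have dab: "diagV V (a,b)" using abS less.prems by auto
    have ab: "a \<in> V" "b \<in> V" "a < b" using dab by (auto simp: diagV_def)
    note sp = split_S[OF less.prems(1) abS less.prems(3,4)]
    note sc = split_card[OF less.prems(1) dab]
    define S1 where "S1 = {E\<in>S-{(a,b)}. fst E \<in> V1 V a b \<and> snd E \<in> V1 V a b}"
    define S2 where "S2 = {E\<in>S-{(a,b)}. fst E \<in> V2 V a b \<and> snd E \<in> V2 V a b}"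
    have fin: "finite (V1 V a b)" "finite (V2 V a b)" using less.prems by (auto simp: V1_def V2_def)
    have c1: "card S1 + 3 \<le> card (V1 V a b)"
      using count_diag[of "V1 V a b" S1] sc fin sp unfolding S1_def by auto
    have c2: "card S2 + 3 \<le> card (V2 V a b)"
      using count_diag[of "V2 V a b" S2] sc fin sp unfolding S2_def by auto
    have "S1 \<subseteq> V1 V a b \<times> V1 V a b" "S2 \<subseteq> V2 V a b \<times> V2 V a b"
      unfolding S1_def S2_def by (auto simp: mem_Times_iff)
    then have fS: "finite S1" "finite S2" using fin by (auto intro: finite_subset)
    have cS: "card S = 1 + card S1 + card S2"
      using sp(1-3) fS unfolding S1_def S2_def
      by (metis (no_types, lifting) card_Un_disjoint card_insert_disjoint finite_UnI plus_1_eq_Suc add.assoc)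
    have S1S: "S1 \<subseteq> S" and S2S: "S2 \<subseteq> S" using sp unfolding S1_def S2_def by auto
    from adj_into[OF less.prems(1) ab less.prems(5)]
    show ?thesis
    proof
      assume adj1: "adjV (V1 V a b) p q"
      have na: "\<not> apexV (V1 V a b) S1 p q"
        using less.prems(6) join_trans1[OF less.prems(1) abS dab S1S] unfolding apexV_def
        by (auto simp: V1_def)
      have "card S1 + 4 \<le> card (V1 V a b)"
        using less.hyps[of "V1 V a b" S1] sc fin sp adj1 na unfolding S1_def by auto
      then show ?thesis using cS c2 sc by linarith
    next
      assume adj2: "adjV (V2 V a b) p q"
      have na: "\<not> apexV (V2 V a b) S2 p q"
        using less.prems(6) join_trans2[OF less.prems(1) abS dab S2S] unfolding apexV_def
        by (auto simp: V2_def)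
      have "card S2 + 4 \<le> card (V2 V a b)"
        using less.hyps[of "V2 V a b" S2] sc fin sp adj2 na unfolding S2_def by auto
      then show ?thesis using cS c1 sc by linarith
    qed
  qed
qed

definition half :: "nat \<Rightarrow> bool \<Rightarrow> nat \<times> nat \<Rightarrow> nat set" where
  "half n b D = (if b then {fst D..snd D} else {x\<in>{1..n}. x \<le> fst D \<or> snd D \<le> x})"

definition sp :: "nat \<Rightarrow> nat \<Rightarrow> nat \<times> nat" where
  "sp a c = (min a c, max a c)"

lemma Min_range: "1 \<le> n \<Longrightarrow> Min {1..n::nat} = 1" "1 \<le> n \<Longrightarrow> Max {1..n::nat} = n"
  by (auto intro!: Min_eqI Max_eqI)

lemma adjV_range: "1 \<le> n \<Longrightarrow> adjV {1..n} a b \<longleftrightarrow> (a < b \<and> 1 \<le> a \<and> b \<le> n \<and> is_side n a b)"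
  unfolding adjV_def Min_range is_side_def
  apply (rule iffI)
  by auto

lemma diagV_range: "1 \<le> n \<Longrightarrow> diagV {1..n} D \<longleftrightarrow> is_diagonal n D"
  unfolding diagV_def adjV_range is_diagonal_def is_side_def
  by (cases D) auto

lemma H5a:
  assumes "x \<in> half n b (u,v)" "x \<noteq> u" "x \<noteq> v" "1 \<le> u" "u < v" "v \<le> n"
  shows "\<exists>b'. half n b' (sp u x) \<subseteq> half n b (u,v) - {v}"
proof (cases b)
  case True
  then show ?thesis using assms by (intro exI[of _ True]) (auto simp: half_def sp_def)
next
  case False
  then have "x < u \<or> v < x" "x \<le> n" "1 \<le> x" using assms by (auto simp: half_def)
  then show ?thesis
  proof (elim disjE)
    assume "x < u" then show ?thesis using assms False by (intro exI[of _ True]) (auto simp: half_def sp_def)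
  next
    assume "v < x" then show ?thesis using assms False by (intro exI[of _ False]) (auto simp: half_def sp_def)
  qed
qed

lemma H5b:
  assumes "x \<in> half n b (u,v)" "x \<noteq> u" "x \<noteq> v" "1 \<le> u" "u < v" "v \<le> n"
  shows "\<exists>b'. half n b' (sp x v) \<subseteq> half n b (u,v) - {u}"
proof (cases b)
  case True
  then show ?thesis using assms by (intro exI[of _ True]) (auto simp: half_def sp_def)
next
  case False
  then have "x < u \<or> v < x" "x \<le> n" "1 \<le> x" using assms by (auto simp: half_def)
  then show ?thesis
  proof (elim disjE)
    assume "x < u" then show ?thesis using assms False by (intro exI[of _ False]) (auto simp: half_def sp_def)
  next
    assume "v < x" then show ?thesis using assms False by (intro exI[of _ True]) (auto simp: half_def sp_def)
  qed
qed

lemma H1: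
  assumes "x \<in> half n b (u,v)" "x \<noteq> u" "x \<noteq> v" "1 \<le> u" "u < v" "v \<le> n"
    "i \<in> half n b (u,v)" "i \<notin> {u,v,x}"
  shows "(\<exists>b'. i \<in> half n b' (sp u x) \<and> half n b' (sp u x) \<subseteq> half n b (u,v) - {v}) \<or>
         (\<exists>b'. i \<in> half n b' (sp x v) \<and> half n b' (sp x v) \<subseteq> half n b (u,v) - {u})"
proof (cases b)
  case True
  then have "u < x" "x < v" "u < i" "i < v" using assms by (auto simp: half_def)
  then show ?thesis
  proof (cases "i < x")
    case True
    then show ?thesis using assms \<open>u < x\<close> \<open>x < v\<close> \<open>u < i\<close> \<open>b\<close>
      by (intro disjI1 exI[of _ True]) (auto simp: half_def sp_def)
  next
    case False
    then show ?thesis using assms \<open>u < x\<close> \<open>x < v\<close> \<open>i < v\<close> \<open>b\<close>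
      by (intro disjI2 exI[of _ True]) (auto simp: half_def sp_def)
  qed
next
  case False
  then have x: "x < u \<or> v < x" "x \<le> n" "1 \<le> x" and i: "i < u \<or> v < i" "i \<le> n" "1 \<le> i"
    using assms by (auto simp: half_def)
  consider "x < u" "i < x" | "x < u" "x < i" "i < u" | "x < u" "v < i" |
     "v < x" "i < u" | "v < x" "v < i" "i < x" | "v < x" "x < i"
    using x i assms(8) by fastforce
  then show ?thesis
  proof cases
    case 1 then show ?thesis using assms False x i by (intro disjI2 exI[of _ False]) (auto simp: half_def sp_def)
  next
    case 2 then show ?thesis using assms False x i by (intro disjI1 exI[of _ True]) (auto simp: half_def sp_def)
  next
    case 3 then show ?thesis using assms False x i by (intro disjI2 exI[of _ False]) (auto simp: half_def sp_def)
  next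
    case 4 then show ?thesis using assms False x i by (intro disjI1 exI[of _ False]) (auto simp: half_def sp_def)
  next
    case 5 then show ?thesis using assms False x i by (intro disjI2 exI[of _ True]) (auto simp: half_def sp_def)
  next
    case 6 then show ?thesis using assms False x i by (intro disjI1 exI[of _ False]) (auto simp: half_def sp_def)
  qed
qed

lemma H2:
  assumes "is_side n a c" "a < c" "s \<in> half n b (a,c)" "s \<notin> {a,c}" "1 \<le> s" "s \<le> n"
  shows "half n b (a,c) = {1..n}"
  using assms by (cases b) (auto simp: half_def is_side_def)

lemma H3:
  assumes "t \<in> half n b (u,v)" "t \<notin> {u,v}" "s \<in> {1..n}" "s \<notin> half n b (u,v)" "u < v" "1 \<le> u" "v \<le> n"
  shows "crosses (u,v) (sp t s)"
  using assms by (cases b) (auto simp: half_def sp_def crosses_def min_def max_def)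

lemma H4:
  assumes "x \<in> half n b (u,v)" "x \<notin> {u,v}" "is_side n (min u x) (max u x)" "is_side n (min x v) (max x v)"
    "1 \<le> u" "u < v" "v \<le> n" "\<not> is_side n u v"
  shows "half n b (u,v) = {u,x,v}"
  using assms by (cases b) (auto simp: half_def is_side_def min_def max_def split: if_splits)

lemma nb_unique:
  assumes "is_side n (min u w) (max u w)" "is_side n (min w v) (max w v)"
    "is_side n (min u1 w) (max u1 w)" "is_side n (min w v1) (max w v1)"
    "u < v" "u1 < v1" "4 \<le> n" "u \<le> n" "v \<le> n" "u1 \<le> n" "v1 \<le> n" "w \<le> n"
  shows "(u,v) = (u1,v1)"
  using assms by (auto simp: is_side_def min_def max_def split: if_splits)

lemma nxt_nb:
  assumes "is_side n (min u i) (max u i)" "is_side n (min i v) (max i v)" "u \<noteq> v" "4 \<le> n"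
    "u \<le> n" "v \<le> n" "i \<le> n" "1 \<le> i"
  shows "(if i = n then 1 else i + 1) \<in> {u,v}"
  using assms by (auto simp: is_side_def min_def max_def split: if_splits)

locale tri =
  fixes n :: nat and T :: "(nat \<times> nat) set"
  assumes n4: "n \<ge> 4" and triang: "is_triangulation n T"
begin

lemma TD: "T \<subseteq> Collect (diagV {1..n})" using triang n4 diagV_range[of n]
  by (auto simp: is_triangulation_def)

lemma Tdiag: "D \<in> T \<Longrightarrow> is_diagonal n D" using triang by (auto simp: is_triangulation_def)

lemma Tncr: "ncr T" using triang by (auto simp: is_triangulation_def ncr_def)

lemma Tcard: "card T = n - 3" using triang by (auto simp: is_triangulation_def)

lemma Tfin: "finite T" using Tcard n4 card.infinite by fastforce

lemma Tne: "T \<noteq> {}" using Tcard n4 by auto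

lemma joined_of_joinV: "joinV {1..n} T c d \<Longrightarrow> joined n T c d"
  using n4 adjV_range[of n c d] by (auto simp: joinV_def joined_def)

lemma apex:
  assumes D: "(u,v) \<in> T"
  shows "\<exists>x\<in>half n b (u,v). x \<noteq> u \<and> x \<noteq> v \<and> joined n T (min u x) (max u x) \<and> joined n T (min x v) (max x v)"
proof (rule ccontr)
  assume na: "\<not> ?thesis"
  let ?V = "{1..n::nat}"
  have fV: "finite ?V" by simp
  have dD: "diagV ?V (u,v)" using D TD by auto
  have uv: "1 \<le> u" "u < v" "v \<le> n" using Tdiag[OF D] by (auto simp: is_diagonal_def)
  note sp = split_S[OF fV D TD Tncr]
  note sc = split_card[OF fV dD]
  define S1 where "S1 = {E\<in>T-{(u,v)}. fst E \<in> V1 ?V u v \<and> snd E \<in> V1 ?V u v}"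
  define S2 where "S2 = {E\<in>T-{(u,v)}. fst E \<in> V2 ?V u v \<and> snd E \<in> V2 ?V u v}"
  have fin: "finite (V1 ?V u v)" "finite (V2 ?V u v)" by (auto simp: V1_def V2_def)
  have c1: "card S1 + 3 \<le> card (V1 ?V u v)"
    using count_diag[of "V1 ?V u v" S1] sc fin sp unfolding S1_def by auto
  have c2: "card S2 + 3 \<le> card (V2 ?V u v)"
    using count_diag[of "V2 ?V u v" S2] sc fin sp unfolding S2_def by auto
  have "S1 \<subseteq> V1 ?V u v \<times> V1 ?V u v" "S2 \<subseteq> V2 ?V u v \<times> V2 ?V u v"
    unfolding S1_def S2_def by (auto simp: mem_Times_iff)
  then have fS: "finite S1" "finite S2" using fin by (auto intro: finite_subset)
  have cS: "card T = 1 + card S1 + card S2"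
    using sp(1-3) fS unfolding S1_def S2_def
    by (metis (no_types, lifting) card_Un_disjoint card_insert_disjoint finite_UnI plus_1_eq_Suc add.assoc)
  have S1S: "S1 \<subseteq> T" and S2S: "S2 \<subseteq> T" using sp unfolding S1_def S2_def by auto
  show False
  proof (cases b)
    case True
    have hv: "half n b (u,v) = V1 ?V u v" using True uv by (auto simp: half_def V1_def)
    have adj1: "adjV (V1 ?V u v) u v" using V1_Min[OF fV _ _ uv(2)] uv by (auto simp: adjV_def V1_def)
    have nap: "\<not> apexV (V1 ?V u v) S1 u v"
    proof
      assume "apexV (V1 ?V u v) S1 u v"
      then show False using na join_trans1[OF fV D dD S1S] joined_of_joinV hv
        unfolding apexV_def by blast
    qed
    have "card S1 + 4 \<le> card (V1 ?V u v)"
      using strict_diag[OF fin(1) _ _ _ adj1 nap] sc sp unfolding S1_def by auto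
    then show False using cS c2 sc Tcard n4 card_atLeastAtMost[of 1 n] by linarith
  next
    case False
    have hv: "half n b (u,v) = V2 ?V u v" using False uv by (auto simp: half_def V2_def)
    have adj2: "adjV (V2 ?V u v) u v" using uv by (auto simp: adjV_def V2_def)
    have nap: "\<not> apexV (V2 ?V u v) S2 u v"
    proof
      assume "apexV (V2 ?V u v) S2 u v"
      then show False using na join_trans2[OF fV D dD S2S] joined_of_joinV hv
        unfolding apexV_def by blast
    qed
    have "card S2 + 4 \<le> card (V2 ?V u v)"
      using strict_diag[OF fin(2) _ _ _ adj2 nap] sc sp unfolding S2_def by auto
    then show False using cS c1 sc Tcard n4 card_atLeastAtMost[of 1 n] by linarith
  qed
qed

end


lemma pe_side:
  assumes "1 \<le> a" "a \<le> n" "prev_edge n a = c" "3 \<le> n"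
  shows "is_side n (min a c) (max a c)"
  using assms by (auto simp: prev_edge_def is_side_def min_def max_def)

lemma S_D_sp: "S_D n (sp a c) = S_D n (a,c)"
  by (auto simp: S_D_def sp_def min_def max_def)

lemma share1:
  assumes "1 \<le> u" "u \<le> n" "1 \<le> v" "v \<le> n" "1 \<le> x" "x \<le> n" "u \<noteq> v" "u \<noteq> x" "x \<noteq> v" "4 \<le> n"
    "\<not> is_side n (min u v) (max u v)" "\<not> is_side n (min u x) (max u x)" "is_side n (min x v) (max x v)"
  shows "3 \<le> card (S_D n (u,v) \<inter> S_D n (sp u x))"
proof -
  have c: "prev_edge n x = v \<or> prev_edge n v = x" using assms(5,6,3,4,9,10,13)
    by (auto simp: prev_edge_def is_side_def min_def max_def split: if_splits)
  have pu: "prev_edge n u \<noteq> u" "prev_edge n u \<noteq> v" "prev_edge n u \<noteq> x"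
    using pe_side[OF assms(1,2) refl] assms by (auto simp: prev_edge_def) 
  obtain e where e: "e \<in> {v,x}" "e \<in> S_D n (u,v)" "e \<in> S_D n (u,x)"
    using c by (auto simp: S_D_def)
  have sub: "{prev_edge n u, u, e} \<subseteq> S_D n (u,v) \<inter> S_D n (sp u x)"
    unfolding S_D_sp using e by (auto simp: S_D_def)
  have "card {prev_edge n u, u, e} = 3" using pu e assms(7,8) by auto
  moreover have "finite (S_D n (u,v) \<inter> S_D n (sp u x))" by (simp add: S_D_def)
  ultimately show ?thesis using card_mono[OF _ sub] by simp
qed

lemma half_b:
  assumes "w \<in> half n b (a,c)" "w \<notin> {a,c}" "a < c"
  shows "b = (a < w \<and> w < c)"
  using assms by (cases b) (auto simp: half_def)

lemma half_w:
  assumes "w \<notin> {a,c}" "a < c" "1 \<le> w" "w \<le> n" "c \<le> n"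
  shows "w \<in> half n (a < w \<and> w < c) (a,c)"
  using assms by (auto simp: half_def)

lemma half_fin: "finite (half n b D)"
  by (auto simp: half_def)

lemma half_end: "1 \<le> u \<Longrightarrow> u < v \<Longrightarrow> v \<le> n \<Longrightarrow> u \<in> half n b (u,v) \<and> v \<in> half n b (u,v)"
  by (auto simp: half_def)

lemma half_range: "v \<le> n \<Longrightarrow> 1 \<le> u \<Longrightarrow> half n b (u,v) \<subseteq> {1..n}"
  by (auto simp: half_def)

locale tri3 = tri +
  assumes hyp3: "\<forall>(a, b, c) \<in> triangles n T. is_side n a b \<or> is_side n b c \<or> is_side n a c"
begin

abbreviation "jn a c \<equiv> joined n T (min a c) (max a c)"
abbreviation "sd a c \<equiv> is_side n (min a c) (max a c)"

lemma tri_side: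
  assumes "jn u x" "jn x v" "jn u v" "u \<noteq> x" "x \<noteq> v" "u \<noteq> v"
    "1 \<le> u" "1 \<le> v" "1 \<le> x" "u \<le> n" "v \<le> n" "x \<le> n"
  shows "sd u x \<or> sd x v \<or> sd u v"
proof -
  have H: "\<And>a b c. a < b \<Longrightarrow> b < c \<Longrightarrow> 1 \<le> a \<Longrightarrow> c \<le> n \<Longrightarrow> joined n T a b \<Longrightarrow> joined n T b c \<Longrightarrow>
     joined n T a c \<Longrightarrow> is_side n a b \<or> is_side n b c \<or> is_side n a c"
    using hyp3 unfolding triangles_def by auto
  consider "u < x" "x < v" | "u < v" "v < x" | "x < u" "u < v" | "x < v" "v < u" | "v < u" "u < x" | "v < x" "x < u"
    using assms(4-6) by linarith
  then show ?thesis
  proof cases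
    case 1 then show ?thesis using H[of u x v] assms by (auto simp: min_def max_def)
  next
    case 2 then show ?thesis using H[of u v x] assms by (auto simp: min_def max_def)
  next
    case 3 then show ?thesis using H[of x u v] assms by (auto simp: min_def max_def)
  next
    case 4 then show ?thesis using H[of x v u] assms by (auto simp: min_def max_def)
  next
    case 5 then show ?thesis using H[of v u x] assms by (auto simp: min_def max_def)
  next
    case 6 then show ?thesis using H[of v x u] assms by (auto simp: min_def max_def)
  qed
qed

lemma Tuv: "(u,v) \<in> T \<Longrightarrow> 1 \<le> u \<and> u < v \<and> v \<le> n \<and> \<not> is_side n u v"
  using Tdiag[of "(u,v)"] by (auto simp: is_diagonal_def is_side_def)

lemma jn_T: "jn a c \<Longrightarrow> \<not> sd a c \<Longrightarrow> sp a c \<in> T"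
  by (auto simp: joined_def sp_def)

lemma sp_T: "sp a c \<in> T \<Longrightarrow> \<not> sd a c"
  using Tuv[of "min a c" "max a c"] by (auto simp: sp_def)

lemma ear:
  "\<exists>u1 v1 w. (u1,v1) \<in> T \<and> 1 \<le> w \<and> w \<le> n \<and> w \<notin> {u1,v1} \<and> sd u1 w \<and> sd w v1 \<and>
     (\<forall>E\<in>T. w \<noteq> fst E \<and> w \<noteq> snd E)"
proof -
  obtain D0 where "D0 \<in> T" using Tne by auto
  then obtain P where P: "fst P \<in> T" "\<forall>Q. fst Q \<in> T \<longrightarrow> card (half n (snd P) (fst P)) \<le> card (half n (snd Q) (fst Q))"
    using ex_has_least_nat[of "\<lambda>Q. fst Q \<in> T" "(D0,True)" "\<lambda>Q. card (half n (snd Q) (fst Q))"] by auto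
  obtain u v b where Pe: "P = ((u,v),b)" by (metis prod.collapse)
  have D: "(u,v) \<in> T" and mn: "\<And>D' b'. D' \<in> T \<Longrightarrow> card (half n b (u,v)) \<le> card (half n b' D')"
    using P Pe by auto
  note uv = Tuv[OF D]
  obtain x where x: "x \<in> half n b (u,v)" "x \<noteq> u" "x \<noteq> v" "jn u x" "jn x v"
    using apex[OF D, of b] by auto
  have xr: "1 \<le> x" "x \<le> n" using half_range[of v n u b] x uv by auto
  have vin: "v \<in> half n b (u,v)" "u \<in> half n b (u,v)" using half_end uv by auto
  have s1: "sd u x"
  proof (rule ccontr)
    assume "\<not> sd u x"
    then have T': "sp u x \<in> T" using jn_T x by auto
    obtain b' where "half n b' (sp u x) \<subseteq> half n b (u,v) - {v}" using H5a[OF x(1-3)] uv by auto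
    then have "half n b' (sp u x) \<subset> half n b (u,v)" using vin by blast
    then have "card (half n b' (sp u x)) < card (half n b (u,v))"
      by (rule psubset_card_mono[OF half_fin])
    with mn[OF T'] show False by (meson not_le)
  qed
  have s2: "sd x v"
  proof (rule ccontr)
    assume "\<not> sd x v"
    then have T': "sp x v \<in> T" using jn_T x by auto
    obtain b' where "half n b' (sp x v) \<subseteq> half n b (u,v) - {u}" using H5b[OF x(1-3)] uv by auto
    then have "half n b' (sp x v) \<subset> half n b (u,v)" using vin by blast
    then have "card (half n b' (sp x v)) < card (half n b (u,v))"
      by (rule psubset_card_mono[OF half_fin])
    with mn[OF T'] show False by (meson not_le)
  qed
  have hx: "half n b (u,v) = {u,x,v}" using H4[OF x(1) _ s1 s2] x uv by auto
  have "\<forall>E\<in>T. x \<noteq> fst E \<and> x \<noteq> snd E"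
  proof (intro ballI)
    fix E assume E: "E \<in> T"
    obtain e1 e2 where Ee: "E = (e1,e2)" by (cases E)
    note ee = Tuv[of e1 e2] E Ee
    show "x \<noteq> fst E \<and> x \<noteq> snd E"
    proof (rule ccontr)
      assume "\<not> ?thesis"
      have e12: "1 \<le> e1" "e1 < e2" "e2 \<le> n" using ee by auto
      obtain s where sE: "E = sp x s" "s \<noteq> x" "1 \<le> s" "s \<le> n"
      proof (cases "x = e1")
        case True
        then show ?thesis using that[of e2] e12 Ee by (simp add: sp_def)
      next
        case False
        then have "x = e2" using \<open>\<not> (x \<noteq> fst E \<and> x \<noteq> snd E)\<close> Ee by auto
        then show ?thesis using that[of e1] e12 Ee by (simp add: sp_def)
      qed
      show False
      proof (cases "s \<in> {u,v}")
        case True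
        then have "sd x s" using s1 s2 x(2,3) by (auto simp: min_def max_def)
        then show False using sp_T E sE by auto
      next
        case False
        then have "s \<notin> half n b (u,v)" using hx sE by auto
        then have "crosses (u,v) (sp x s)" using H3[OF x(1) _ _ _] x uv sE by auto
        then show False using Tncr D E sE unfolding ncr_def by auto
      qed
    qed
  qed
  then show ?thesis using D xr x s1 s2 by (intro exI[of _ u] exI[of _ v] exI[of _ x]) auto
qed

definition mw :: "nat \<Rightarrow> nat \<times> nat \<Rightarrow> nat" where
  "mw w E = card (half n (fst E < w \<and> w < snd E) E)"

lemma S_D_swap: "S_D n (a,c) = S_D n (c,a)" by (auto simp: S_D_def)
lemma sp_comm: "sp a c = sp c a" by (auto simp: sp_def)

lemma S_D_ends: "fst D \<in> S_D n D \<and> snd D \<in> S_D n D" by (auto simp: S_D_def split: prod.splits)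

lemma chain:
  assumes E: "(u1,v1)\<in>T" "1\<le>w" "w\<le>n" "w\<notin>{u1,v1}" "sd u1 w" "sd w v1" "\<forall>E\<in>T. w \<noteq> fst E \<and> w \<noteq> snd E"
    and D: "(u,v) \<in> T" "(u,v) \<noteq> (u1,v1)"
  shows "\<exists>D'\<in>T. 3 \<le> card (S_D n (u,v) \<inter> S_D n D') \<and> mw w D' < mw w (u,v)"
proof -
  have uv: "1 \<le> u" "u < v" "v \<le> n" "\<not> is_side n u v" using Tuv[OF D(1)] by auto
  note uv1 = Tuv[OF E(1)]
  have wuv: "w \<notin> {u,v}" using E(7) D(1) by fastforce
  define b where "b = (u < w \<and> w < v)"
  have hw: "w \<in> half n b (u,v)" unfolding b_def using half_w[OF wuv] uv E(2,3) by auto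
  have mD: "mw w (u,v) = card (half n b (u,v))" by (simp add: mw_def b_def)
  obtain x where x: "x \<in> half n b (u,v)" "x \<noteq> u" "x \<noteq> v" "jn u x" "jn x v"
    using apex[OF D(1), of b] by auto
  have xr: "1 \<le> x" "x \<le> n" using half_range[of v n u b] x uv by auto
  have vin: "v \<in> half n b (u,v)" "u \<in> half n b (u,v)" using half_end uv by auto
  have juv: "jn u v" using D(1) uv by (auto simp: joined_def min_def max_def)
  have nsuv: "\<not> sd u v" using uv by (auto simp: min_def max_def)
  have ss: "sd u x \<or> sd x v" using tri_side[OF x(4,5) juv] x uv xr nsuv by auto
  have nb: "\<not> (sd u x \<and> sd x v)"
  proof
    assume a: "sd u x \<and> sd x v"
    have "half n b (u,v) = {u,x,v}" using H4[OF x(1) _ _ _] a x uv by auto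
    then have "w = x" using hw wuv by auto
    then have "(u,v) = (u1,v1)" using nb_unique[of n u w v u1 v1] a E uv uv1 n4 by auto
    then show False using D(2) by simp
  qed
  show ?thesis
  proof (cases "sd x v")
    case True
    then have nux: "\<not> sd u x" using nb by auto
    then have T': "sp u x \<in> T" using jn_T x by auto
    have xw: "x \<noteq> w" using E(7) T' by (auto simp: sp_def min_def max_def split: if_splits)
    have sh: "3 \<le> card (S_D n (u,v) \<inter> S_D n (sp u x))"
      using share1[of u n v x] uv xr x nsuv nux True n4 by auto
    from H1[OF x(1-3) _ uv(2) _ hw] uv wuv xw
    have "(\<exists>b'. w \<in> half n b' (sp u x) \<and> half n b' (sp u x) \<subseteq> half n b (u,v) - {v}) \<or>
         (\<exists>b'. w \<in> half n b' (sp x v) \<and> half n b' (sp x v) \<subseteq> half n b (u,v) - {u})" by auto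
    then show ?thesis
    proof
      assume "\<exists>b'. w \<in> half n b' (sp u x) \<and> half n b' (sp u x) \<subseteq> half n b (u,v) - {v}"
      then obtain b' where b': "w \<in> half n b' (sp u x)" "half n b' (sp u x) \<subseteq> half n b (u,v) - {v}" by auto
      have "b' = (fst (sp u x) < w \<and> w < snd (sp u x))"
        using half_b[of w n b' "min u x" "max u x"] b'(1) wuv xw x(2) by (auto simp: sp_def min_def max_def)
      then have m': "mw w (sp u x) = card (half n b' (sp u x))" by (simp add: mw_def)
      have "half n b' (sp u x) \<subset> half n b (u,v)" using b'(2) vin by blast
      then have "card (half n b' (sp u x)) < card (half n b (u,v))" by (rule psubset_card_mono[OF half_fin])
      then show ?thesis using T' sh m' mD by auto
    next
      assume "\<exists>b'. w \<in> half n b' (sp x v) \<and> half n b' (sp x v) \<subseteq> half n b (u,v) - {u}"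
      then obtain b' where b': "w \<in> half n b' (sp x v)" "half n b' (sp x v) \<subseteq> half n b (u,v) - {u}" by auto
      have "half n b' (sp x v) = {1..n}"
        using H2[of n "min x v" "max x v" w b'] True b'(1) wuv xw x(3) E(2,3) by (auto simp: sp_def min_def max_def)
      then show ?thesis using b'(2) uv by auto
    qed
  next
    case False
    then have nux: "sd u x" using ss by auto
    then have T': "sp x v \<in> T" using jn_T x False by auto
    have xw: "x \<noteq> w" using E(7) T' by (auto simp: sp_def min_def max_def split: if_splits)
    have nsvu: "\<not> sd v u" using nsuv by (simp add: min.commute max.commute)
    have "3 \<le> card (S_D n (v,u) \<inter> S_D n (sp v x))"
      using share1[of v n u x] uv xr x nsvu False nux n4 by (auto simp: min.commute max.commute)
    then have sh: "3 \<le> card (S_D n (u,v) \<inter> S_D n (sp x v))" by (simp add: S_D_swap[of v u] sp_comm)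
    from H1[OF x(1-3) _ uv(2) _ hw] uv wuv xw
    have "(\<exists>b'. w \<in> half n b' (sp u x) \<and> half n b' (sp u x) \<subseteq> half n b (u,v) - {v}) \<or>
         (\<exists>b'. w \<in> half n b' (sp x v) \<and> half n b' (sp x v) \<subseteq> half n b (u,v) - {u})" by auto
    then show ?thesis
    proof
      assume "\<exists>b'. w \<in> half n b' (sp x v) \<and> half n b' (sp x v) \<subseteq> half n b (u,v) - {u}"
      then obtain b' where b': "w \<in> half n b' (sp x v)" "half n b' (sp x v) \<subseteq> half n b (u,v) - {u}" by auto
      have "b' = (fst (sp x v) < w \<and> w < snd (sp x v))"
        using half_b[of w n b' "min x v" "max x v"] b'(1) wuv xw x(3) by (auto simp: sp_def min_def max_def)
      then have m': "mw w (sp x v) = card (half n b' (sp x v))" by (simp add: mw_def)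
      have "half n b' (sp x v) \<subset> half n b (u,v)" using b'(2) vin by blast
      then have "card (half n b' (sp x v)) < card (half n b (u,v))" by (rule psubset_card_mono[OF half_fin])
      then show ?thesis using T' sh m' mD by auto
    next
      assume "\<exists>b'. w \<in> half n b' (sp u x) \<and> half n b' (sp u x) \<subseteq> half n b (u,v) - {v}"
      then obtain b' where b': "w \<in> half n b' (sp u x)" "half n b' (sp u x) \<subseteq> half n b (u,v) - {v}" by auto
      have "half n b' (sp u x) = {1..n}"
        using H2[of n "min u x" "max u x" w b'] nux b'(1) wuv xw x(2) E(2,3) by (auto simp: sp_def min_def max_def)
      then show ?thesis using b'(2) uv by auto
    qed
  qed
qed

lemma cover:
  assumes i: "1 \<le> i" "i \<le> n"
  shows "\<exists>D\<in>T. i \<in> S_D n D"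
proof (cases "\<exists>D\<in>T. i = fst D \<or> i = snd D")
  case True then show ?thesis using S_D_ends by metis
next
  case False
  obtain D0 where D0: "D0 \<in> T" using Tne by auto
  obtain a0 c0 where D0e: "D0 = (a0,c0)" by (cases D0)
  have "i \<notin> {a0,c0}" using False D0 D0e by auto
  then have "i \<in> half n (a0 < i \<and> i < c0) D0" using half_w[of i a0 c0 n] i Tuv[of a0 c0] D0 D0e by auto
  then obtain P where P: "fst P \<in> T \<and> i \<in> half n (snd P) (fst P)"
     "\<forall>Q. fst Q \<in> T \<and> i \<in> half n (snd Q) (fst Q) \<longrightarrow> card (half n (snd P) (fst P)) \<le> card (half n (snd Q) (fst Q))"
    using ex_has_least_nat[of "\<lambda>Q. fst Q \<in> T \<and> i \<in> half n (snd Q) (fst Q)" "(D0,a0 < i \<and> i < c0)"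
        "\<lambda>Q. card (half n (snd Q) (fst Q))"] D0 by auto
  obtain u v b where Pe: "P = ((u,v),b)" by (metis prod.collapse)
  have D: "(u,v) \<in> T" "i \<in> half n b (u,v)"
    and mn: "\<And>D' b'. D' \<in> T \<Longrightarrow> i \<in> half n b' D' \<Longrightarrow> card (half n b (u,v)) \<le> card (half n b' D')"
    using P Pe by auto
  have uv: "1 \<le> u" "u < v" "v \<le> n" "\<not> is_side n u v" using Tuv[OF D(1)] by auto
  have iuv: "i \<notin> {u,v}" using False D(1) by fastforce
  obtain x where x: "x \<in> half n b (u,v)" "x \<noteq> u" "x \<noteq> v" "jn u x" "jn x v"
    using apex[OF D(1), of b] by auto
  have xr: "1 \<le> x" "x \<le> n" using half_range[of v n u b] x uv by auto
  have vin: "v \<in> half n b (u,v)" "u \<in> half n b (u,v)" using half_end uv by auto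
  show ?thesis
  proof (cases "x = i")
    case True
    have s1: "sd u i"
    proof (rule ccontr)
      assume "\<not> sd u i"
      then have "sp u i \<in> T" using jn_T x True by auto
      then show False using False by (auto simp: sp_def min_def max_def split: if_splits)
    qed
    have s2: "sd i v"
    proof (rule ccontr)
      assume "\<not> sd i v"
      then have "sp i v \<in> T" using jn_T x True by auto
      then show False using False by (auto simp: sp_def min_def max_def split: if_splits)
    qed
    have "(if i = n then 1 else i + 1) \<in> {u,v}" using nxt_nb[OF s1 s2] uv n4 i by auto
    moreover have "prev_edge n (if i = n then 1 else i + 1) = i" using i by (auto simp: prev_edge_def)
    ultimately have "i \<in> S_D n (u,v)" by (auto simp: S_D_def)
    then show ?thesis using D(1) by auto
  next
    case xi: False
    from H1[OF x(1-3) _ uv(2) _ D(2)] uv iuv xi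
    have "(\<exists>b'. i \<in> half n b' (sp u x) \<and> half n b' (sp u x) \<subseteq> half n b (u,v) - {v}) \<or>
         (\<exists>b'. i \<in> half n b' (sp x v) \<and> half n b' (sp x v) \<subseteq> half n b (u,v) - {u})" by auto
    then show ?thesis
    proof
      assume "\<exists>b'. i \<in> half n b' (sp u x) \<and> half n b' (sp u x) \<subseteq> half n b (u,v) - {v}"
      then obtain b' where b': "i \<in> half n b' (sp u x)" "half n b' (sp u x) \<subseteq> half n b (u,v) - {v}" by auto
      show ?thesis
      proof (cases "sd u x")
        case True
        have "half n b' (sp u x) = {1..n}"
          using H2[of n "min u x" "max u x" i b'] True b'(1) iuv xi x(2) i by (auto simp: sp_def min_def max_def)
        then show ?thesis using b'(2) uv by auto
      next
        case False
        then have T': "sp u x \<in> T" using jn_T x by auto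
        have "half n b' (sp u x) \<subset> half n b (u,v)" using b'(2) vin by blast
        then have "card (half n b' (sp u x)) < card (half n b (u,v))" by (rule psubset_card_mono[OF half_fin])
        then show ?thesis using mn[OF T' b'(1)] by auto
      qed
    next
      assume "\<exists>b'. i \<in> half n b' (sp x v) \<and> half n b' (sp x v) \<subseteq> half n b (u,v) - {u}"
      then obtain b' where b': "i \<in> half n b' (sp x v)" "half n b' (sp x v) \<subseteq> half n b (u,v) - {u}" by auto
      show ?thesis
      proof (cases "sd x v")
        case True
        have "half n b' (sp x v) = {1..n}"
          using H2[of n "min x v" "max x v" i b'] True b'(1) iuv xi x(3) i by (auto simp: sp_def min_def max_def)
        then show ?thesis using b'(2) uv by auto
      next
        case False
        then have T': "sp x v \<in> T" using jn_T x by auto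
        have "half n b' (sp x v) \<subset> half n b (u,v)" using b'(2) vin by blast
        then have "card (half n b' (sp x v)) < card (half n b (u,v))" by (rule psubset_card_mono[OF half_fin])
        then show ?thesis using mn[OF T' b'(1)] by auto
      qed
    qed
  qed
qed

end

definition K0 :: "nat \<Rightarrow> (nat\<times>nat) list \<Rightarrow> nat set" where
  "K0 n L = S_D n (L!0) - {Max (S_D n (L!0))}"

definition Kk :: "nat \<Rightarrow> (nat\<times>nat) list \<Rightarrow> nat \<Rightarrow> nat set" where
  "Kk n L k = K0 n L \<union> (\<Union>j\<in>{..<k}. S_D n (L!j))"

lemma Kk_0: "Kk n L 0 = K0 n L" by (simp add: Kk_def)
lemma Kk_Suc: "Kk n L (Suc k) = Kk n L k \<union> S_D n (L!k)" by (auto simp: Kk_def lessThan_Suc)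

locale build =
  fixes n :: nat and T :: "(nat\<times>nat) set" and L :: "(nat\<times>nat) list"
  assumes n4: "n \<ge> 4" and setL: "set L = T"
    and S4: "\<forall>D\<in>T. card (S_D n D) = 4 \<and> S_D n D \<subseteq> {1..n}"
    and step: "\<forall>k<length L. card (S_D n (L!k) - Kk n L k) = 1"
    and full: "Kk n L (length L) = {1..n}"
    and K0c: "card (K0 n L) = 3" "K0 n L \<subseteq> {1..n}"

lemma S_D_card:
  assumes "is_diagonal n D" "n \<ge> 4"
  shows "card (S_D n D) = 4 \<and> S_D n D \<subseteq> {1..n}"
  using assms by (cases D) (auto simp: is_diagonal_def S_D_def prev_edge_def card_insert_if)

lemma sorted_map_lt:
  assumes "sorted (map f L)" "j < length L" "k < length L" "f (L!j) < f (L!k)"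
  shows "j < k"
proof (rule ccontr)
  assume "\<not> j < k"
  then have "f (L!k) \<le> f (L!j)" using assms(1,2) sorted_iff_nth_mono[of "map f L"] by auto
  with assms(4) show False by simp
qed

context tri3
begin

lemma order_exists:
  "\<exists>L. distinct L \<and> set L = T \<and> (\<forall>k<length L. 0 < k \<longrightarrow> (\<exists>j<k. 3 \<le> card (S_D n (L!k) \<inter> S_D n (L!j))))"
proof -
  obtain u1 v1 w where E: "(u1,v1) \<in> T" "1 \<le> w" "w \<le> n" "w \<notin> {u1,v1}" "sd u1 w" "sd w v1"
     "\<forall>E\<in>T. w \<noteq> fst E \<and> w \<noteq> snd E" using ear by blast
  obtain xs where xs: "distinct xs" "set xs = T" using finite_distinct_list[OF Tfin] by blast
  define L where "L = sort_key (mw w) xs"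
  have L: "distinct L" "set L = T" "sorted (map (mw w) L)" using xs by (auto simp: L_def)
  have ch: "\<And>k. k < length L \<Longrightarrow> L!k \<noteq> (u1,v1) \<Longrightarrow> \<exists>j<k. 3 \<le> card (S_D n (L!k) \<inter> S_D n (L!j))"
  proof -
    fix k assume k: "k < length L" "L!k \<noteq> (u1,v1)"
    obtain u v where uv: "L!k = (u,v)" by (cases "L!k")
    have "(u,v) \<in> T" using k uv L(2) nth_mem by metis
    from chain[OF E this] k uv obtain D' where D': "D' \<in> T" "3 \<le> card (S_D n (L!k) \<inter> S_D n D')"
      "mw w D' < mw w (L!k)" by auto
    obtain j where j: "j < length L" "L!j = D'" using D' L(2) by (metis in_set_conv_nth)
    have "j < k" using sorted_map_lt[OF L(3) j(1) k(1)] D' j by simp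
    then show "\<exists>j<k. 3 \<le> card (S_D n (L!k) \<inter> S_D n (L!j))" using D' j by auto
  qed
  have "\<forall>k<length L. 0 < k \<longrightarrow> (\<exists>j<k. 3 \<le> card (S_D n (L!k) \<inter> S_D n (L!j)))"
  proof (intro allI impI)
    fix k assume k: "k < length L" "0 < k"
    show "\<exists>j<k. 3 \<le> card (S_D n (L!k) \<inter> S_D n (L!j))"
    proof (cases "L!k = (u1,v1)")
      case True
      then have "L!0 \<noteq> (u1,v1)" using k L(1) nth_eq_iff_index_eq[of L 0 k] by force
      moreover have "0 < length L" using k(1) by arith
      ultimately obtain j where "j < (0::nat)" using ch[of 0] by blast
      then show ?thesis by simp
    qed (use ch k in auto)
  qed
  then show ?thesis using L by blast
qed

lemma build_exists: "\<exists>L. build n T L"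
proof -
  obtain L where L: "distinct L" "set L = T"
    "\<forall>k<length L. 0 < k \<longrightarrow> (\<exists>j<k. 3 \<le> card (S_D n (L!k) \<inter> S_D n (L!j)))"
    using order_exists by blast
  have len: "length L = n - 3" using L(1,2) Tcard distinct_card by fastforce
  have Lne: "0 < length L" using len n4 by auto
  have S4: "\<forall>D\<in>T. card (S_D n D) = 4 \<and> S_D n D \<subseteq> {1..n}" using S_D_card Tdiag n4 by blast
  have L0: "L!0 \<in> T" using Lne L(2) nth_mem by blast
  have fS: "finite (S_D n D)" for D by (cases D) (simp add: S_D_def)
  have neS: "S_D n D \<noteq> {}" for D by (cases D) (simp add: S_D_def)
  have K0c: "card (K0 n L) = 3" "K0 n L \<subseteq> {1..n}"
    using S4 L0 Max_in[OF fS neS] by (auto simp: K0_def card_Diff_singleton fS)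
  have fK: "finite (Kk n L k)" for k using fS by (auto simp: Kk_def K0_def)
  have st1: "card (S_D n (L!k) - Kk n L k) \<le> 1" if k: "k < length L" for k
  proof (cases "k = 0")
    case True
    have "S_D n (L!0) - K0 n L \<subseteq> {Max (S_D n (L!0))}" by (auto simp: K0_def)
    then have "card (S_D n (L!0) - K0 n L) \<le> card {Max (S_D n (L!0))}" by (intro card_mono) auto
    then show ?thesis using True by (simp add: Kk_0)
  next
    case False
    then obtain j where j: "j < k" "3 \<le> card (S_D n (L!k) \<inter> S_D n (L!j))" using L(3) k by auto
    have "S_D n (L!j) \<subseteq> Kk n L k" using j by (auto simp: Kk_def)
    then have sub: "S_D n (L!k) - Kk n L k \<subseteq> S_D n (L!k) - (S_D n (L!k) \<inter> S_D n (L!j))" by auto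
    have c4: "card (S_D n (L!k)) = 4" using S4 k L(2) nth_mem by blast
    have "card (S_D n (L!k) - (S_D n (L!k) \<inter> S_D n (L!j))) = 4 - card (S_D n (L!k) \<inter> S_D n (L!j))"
      using c4 fS by (simp add: card_Diff_subset)
    moreover have "card (S_D n (L!k) - Kk n L k) \<le> card (S_D n (L!k) - (S_D n (L!k) \<inter> S_D n (L!j)))"
      by (rule card_mono) (use fS sub in auto)
    ultimately show ?thesis using j(2) by linarith
  qed
  have cS: "card (Kk n L (Suc k)) = card (Kk n L k) + card (S_D n (L!k) - Kk n L k)" for k
  proof -
    have "Kk n L (Suc k) = Kk n L k \<union> (S_D n (L!k) - Kk n L k)" by (auto simp: Kk_Suc)
    moreover have "card (Kk n L k \<union> (S_D n (L!k) - Kk n L k)) = card (Kk n L k) + card (S_D n (L!k) - Kk n L k)"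
      by (rule card_Un_disjoint) (use fK fS in auto)
    ultimately show ?thesis by simp
  qed
  have bound: "k \<le> length L \<Longrightarrow> card (Kk n L k) \<le> 3 + k" for k
  proof (induction k)
    case 0 then show ?case using K0c by (simp add: Kk_0)
  next
    case (Suc k) then show ?case using cS[of k] st1[of k] by simp
  qed
  have bound2: "k + d \<le> length L \<Longrightarrow> card (Kk n L (k+d)) \<le> card (Kk n L k) + d" for k d
  proof (induction d)
    case (Suc d) then show ?case using cS[of "k+d"] st1[of "k+d"] by simp
  qed simp
  have full: "Kk n L (length L) = {1..n}"
  proof
    show "Kk n L (length L) \<subseteq> {1..n}"
      using K0c S4 L(2) by (auto simp: Kk_def)
    show "{1..n} \<subseteq> Kk n L (length L)"
    proof
      fix i assume "i \<in> {1..n}"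
      then have "\<exists>D\<in>T. i \<in> S_D n D" using cover[of i] by auto
      then obtain D where D: "D \<in> T" "i \<in> S_D n D" by blast
      then obtain j where "j < length L" "L!j = D" using L(2) by (metis in_set_conv_nth)
      then show "i \<in> Kk n L (length L)" using D by (auto simp: Kk_def)
    qed
  qed
  have step: "\<forall>k<length L. card (S_D n (L!k) - Kk n L k) = 1"
  proof (intro allI impI)
    fix k assume k: "k < length L"
    show "card (S_D n (L!k) - Kk n L k) = 1"
    proof (rule ccontr)
      assume "card (S_D n (L!k) - Kk n L k) \<noteq> 1"
      then have "card (S_D n (L!k) - Kk n L k) = 0" using st1[OF k] by simp
      then have c1: "card (Kk n L (Suc k)) \<le> 3 + k" using cS[of k] bound[of k] k by simp
      have e: "Suc k + (length L - Suc k) = length L" using k by simp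
      have "card (Kk n L (Suc k + (length L - Suc k))) \<le> card (Kk n L (Suc k)) + (length L - Suc k)"
        using bound2[of "Suc k" "length L - Suc k"] k by simp
      then have "card (Kk n L (length L)) \<le> 3 + k + (length L - Suc k)" unfolding e using c1 k by linarith
      then show False using full len n4 k by simp
    qed
  qed
  show ?thesis
    by (rule exI[of _ L], unfold_locales) (use n4 L S4 step full K0c in auto)
qed

end

definition sc :: "complex \<Rightarrow> complex \<times> complex \<Rightarrow> complex \<times> complex" where
  "sc l x = (l * fst x, l * snd x)"

definition mob :: "complex \<Rightarrow> complex \<Rightarrow> complex \<Rightarrow> complex \<Rightarrow> complex \<times> complex \<Rightarrow> complex \<times> complex" where
  "mob a b c d x = (a * fst x + b * snd x, c * fst x + d * snd x)"

lemma det2_mob: "det2 (mob a b c d x) (mob a b c d z) = (a*d - b*c) * det2 x z"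
  by (simp add: det2_def mob_def algebra_simps)

lemma det2_sc: "det2 (sc l x) (sc l' z) = l * l' * det2 x z"
  by (simp add: det2_def sc_def algebra_simps)

lemma det2_sc1: "det2 (sc l x) z = l * det2 x z" and det2_sc2: "det2 x (sc l z) = l * det2 x z"
  by (simp_all add: det2_def sc_def algebra_simps)

lemma det2_anti: "det2 x z = - det2 z x" by (simp add: det2_def)
lemma det2_self: "det2 x x = 0" by (simp add: det2_def)

lemma det2_nz: "det2 x z \<noteq> 0 \<Longrightarrow> x \<noteq> (0,0)" by (auto simp: det2_def)

lemma sc_nz: "l \<noteq> 0 \<Longrightarrow> x \<noteq> (0,0) \<Longrightarrow> sc l x \<noteq> (0,0)" by (auto simp: sc_def prod_eq_iff)

lemma par_ex:
  assumes "det2 u v = 0" "u \<noteq> (0,0)"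
  shows "\<exists>l. v = sc l u"
proof (cases "fst u = 0")
  case True
  then have s: "snd u \<noteq> 0" using assms(2) by (auto simp: prod_eq_iff)
  have "fst v = 0" using assms(1) True s by (auto simp: det2_def)
  then show ?thesis using s True by (intro exI[of _ "snd v / snd u"]) (auto simp: sc_def prod_eq_iff)
next
  case False
  have "snd v = fst v / fst u * snd u" using assms(1) False by (auto simp: det2_def field_simps)
  then show ?thesis using False by (intro exI[of _ "fst v / fst u"]) (auto simp: sc_def prod_eq_iff)
qed

lemma par_ex_nz:
  assumes "det2 u v = 0" "u \<noteq> (0,0)" "v \<noteq> (0,0)"
  shows "\<exists>l. l \<noteq> 0 \<and> v = sc l u"
  using par_ex[OF assms(1,2)] assms(3) by (auto simp: sc_def)

lemma mob_equiv: "equiv (conf n) (mobius_equiv n)"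
proof (rule equivI)
  show "mobius_equiv n \<subseteq> conf n \<times> conf n" by (auto simp: mobius_equiv_def)
  show "refl_on (conf n) (mobius_equiv n)"
  proof (rule refl_onI)
    fix p assume "p \<in> conf n"
    define l1 where "l1 = (\<lambda>i::nat. (1::complex))"
    have "\<forall>i\<in>{1..n}. l1 i \<noteq> 0 \<and> p i = (l1 i * (1 * fst (p i) + 0 * snd (p i)), l1 i * (0 * fst (p i) + 1 * snd (p i)))"
      by (simp add: l1_def)
    moreover have "(1::complex) * 1 - 0 * 0 \<noteq> 0" by simp
    ultimately show "(p,p) \<in> mobius_equiv n" unfolding mobius_equiv_def using \<open>p \<in> conf n\<close> by blast
  qed
  show "sym (mobius_equiv n)"
  proof (rule symI)
    fix p q assume "(p,q) \<in> mobius_equiv n"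
    then obtain a b c d l where pq: "p \<in> conf n" "q \<in> conf n" "a*d - b*c \<noteq> 0"
      "\<forall>i\<in>{1..n}. l i \<noteq> 0 \<and> q i = (l i * (a * fst (p i) + b * snd (p i)), l i * (c * fst (p i) + d * snd (p i)))"
      unfolding mobius_equiv_def by blast
    define \<Delta> where "\<Delta> = a*d - b*c"
    define l2 where "l2 = (\<lambda>i. 1 / (l i * \<Delta>))"
    have "\<forall>i\<in>{1..n}. l2 i \<noteq> 0 \<and> p i = (l2 i * (d * fst (q i) + (-b) * snd (q i)),
            l2 i * ((-c) * fst (q i) + a * snd (q i)))"
    proof
      fix i assume i: "i \<in> {1..n}"
      have li: "l i \<noteq> 0" and qi: "q i = (l i * (a * fst (p i) + b * snd (p i)), l i * (c * fst (p i) + d * snd (p i)))"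
        using pq(4) i by auto
      show "l2 i \<noteq> 0 \<and> p i = (l2 i * (d * fst (q i) + (-b) * snd (q i)),
            l2 i * ((-c) * fst (q i) + a * snd (q i)))"
        using li pq(3) unfolding qi \<Delta>_def l2_def by (auto simp: prod_eq_iff field_simps)
    qed
    moreover have "d * a - (-b) * (-c) \<noteq> 0" using pq(3) by (simp add: algebra_simps)
    ultimately show "(q,p) \<in> mobius_equiv n" unfolding mobius_equiv_def using pq(1,2) by blast
  qed
  show "trans (mobius_equiv n)"
  proof (rule transI)
    fix p q r assume "(p,q) \<in> mobius_equiv n" "(q,r) \<in> mobius_equiv n"
    then obtain a b c d l a' b' c' d' l' where pq: "p \<in> conf n" "q \<in> conf n" "a*d - b*c \<noteq> 0"
      "\<forall>i\<in>{1..n}. l i \<noteq> 0 \<and> q i = (l i * (a * fst (p i) + b * snd (p i)), l i * (c * fst (p i) + d * snd (p i)))"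
      and qr: "r \<in> conf n" "a'*d' - b'*c' \<noteq> 0"
      "\<forall>i\<in>{1..n}. l' i \<noteq> 0 \<and> r i = (l' i * (a' * fst (q i) + b' * snd (q i)), l' i * (c' * fst (q i) + d' * snd (q i)))"
      unfolding mobius_equiv_def by blast
    have "(a'*a + b'*c) * (c'*b + d'*d) - (a'*b + b'*d) * (c'*a + d'*c) = (a'*d' - b'*c') * (a*d - b*c)"
      by (simp add: algebra_simps)
    then have det: "(a'*a + b'*c) * (c'*b + d'*d) - (a'*b + b'*d) * (c'*a + d'*c) \<noteq> 0" using pq(3) qr(2) by simp
    define l3 where "l3 = (\<lambda>i. l' i * l i)"
    have "\<forall>i\<in>{1..n}. l3 i \<noteq> 0 \<and> r i = (l3 i * ((a'*a + b'*c) * fst (p i) + (a'*b + b'*d) * snd (p i)),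
        l3 i * ((c'*a + d'*c) * fst (p i) + (c'*b + d'*d) * snd (p i)))"
      using pq(4) qr(3) by (auto simp: algebra_simps l3_def)
    then show "(p,r) \<in> mobius_equiv n" unfolding mobius_equiv_def using pq(1) qr(1) det by blast
  qed
qed

definition lin :: "complex \<Rightarrow> complex \<times> complex \<Rightarrow> complex \<Rightarrow> complex \<times> complex \<Rightarrow> complex \<times> complex" where
  "lin \<alpha> P \<beta> R = (\<alpha> * fst P + \<beta> * fst R, \<alpha> * snd P + \<beta> * snd R)"

definition solve :: "complex \<Rightarrow> nat set \<Rightarrow> (nat \<Rightarrow> complex \<times> complex) \<Rightarrow> nat \<Rightarrow> complex \<times> complex" where
  "solve c S q z = (case sorted_list_of_set S of [a1,a2,a3,a4] \<Rightarrow>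
     (if z = a4 then lin (det2 (q a1) (q a2)) (q a3) (- c * det2 (q a1) (q a3)) (q a2)
      else if z = a3 then lin (det2 (q a1) (q a2)) (q a4) (c * det2 (q a2) (q a4)) (q a1)
      else if z = a2 then lin (det2 (q a3) (q a4)) (q a1) (c * det2 (q a1) (q a3)) (q a4)
      else lin (det2 (q a3) (q a4)) (q a2) (- c * det2 (q a2) (q a4)) (q a3))
   | _ \<Rightarrow> (0,0))"

definition crn where "crn q a1 a2 a3 a4 = det2 (q a1) (q a2) * det2 (q a3) (q a4)"
definition crd where "crd q a1 a2 a3 a4 = det2 (q a1) (q a3) * det2 (q a2) (q a4)"

lemma sorted4:
  assumes "finite S" "card S = 4"
  shows "\<exists>a1 a2 a3 a4. sorted_list_of_set S = [a1,a2,a3,a4] \<and> a1 < a2 \<and> a2 < a3 \<and> a3 < a4 \<and> S = {a1,a2,a3,a4}"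
proof -
  define xs where "xs = sorted_list_of_set S"
  have len: "length xs = 4" using assms by (simp add: xs_def)
  have "\<exists>a1 a2 a3 a4. xs = [a1,a2,a3,a4]" using len by (simp add: length_Suc_conv numeral_eq_Suc) blast
  then obtain a1 a2 a3 a4 where xs: "xs = [a1,a2,a3,a4]" by blast
  have "sorted_wrt (<) xs" unfolding xs_def by (rule strict_sorted_list_of_set)
  moreover have "set xs = S" using assms by (simp add: xs_def)
  ultimately show ?thesis using xs unfolding xs_def by auto
qed

lemma solve_eq: "sorted_list_of_set S = [a1,a2,a3,a4] \<Longrightarrow> solve c S q z =
     (if z = a4 then lin (det2 (q a1) (q a2)) (q a3) (- c * det2 (q a1) (q a3)) (q a2)
      else if z = a3 then lin (det2 (q a1) (q a2)) (q a4) (c * det2 (q a2) (q a4)) (q a1)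
      else if z = a2 then lin (det2 (q a3) (q a4)) (q a1) (c * det2 (q a1) (q a3)) (q a4)
      else lin (det2 (q a3) (q a4)) (q a2) (- c * det2 (q a2) (q a4)) (q a3))"
  by (simp add: solve_def)

lemma cr_set_eq: "sorted_list_of_set S = [a1,a2,a3,a4] \<Longrightarrow> cr_set p S = crn p a1 a2 a3 a4 / crd p a1 a2 a3 a4"
  by (simp add: cr_set_def crossratio_def crn_def crd_def)

lemma ident:
  assumes "sorted_list_of_set S = [a1,a2,a3,a4]" "z \<in> {a1,a2,a3,a4}" "a1 < a2" "a2 < a3" "a3 < a4"
  shows "crn q a1 a2 a3 a4 - c * crd q a1 a2 a3 a4 =
    (if z = a4 \<or> z = a2 then 1 else -1) * det2 (solve c S q z) (q z)"
  using assms(2-5) unfolding solve_eq[OF assms(1)]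
  by (auto simp: crn_def crd_def lin_def det2_def algebra_simps)

lemma solve_local:
  assumes "sorted_list_of_set S = [a1,a2,a3,a4]" "z \<in> {a1,a2,a3,a4}" "a1 < a2" "a2 < a3" "a3 < a4"
    "\<forall>a\<in>{a1,a2,a3,a4}-{z}. q a = q' a"
  shows "solve c S q z = solve c S q' z"
  using assms(2-6) unfolding solve_eq[OF assms(1)] by auto

lemma lin_sc: "lin (l1 * l2 * x) (sc l3 A) (l1 * l3 * y) (sc l2 B) = sc (l1*l2*l3) (lin x A y B)"
  by (simp add: lin_def sc_def algebra_simps)

lemma solve_scale:
  assumes "sorted_list_of_set S = [a1,a2,a3,a4]" "z \<in> {a1,a2,a3,a4}" "a1 < a2" "a2 < a3" "a3 < a4"
    "\<forall>a\<in>{a1,a2,a3,a4}-{z}. l a \<noteq> 0 \<and> q a = sc (l a) (P a)"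
  shows "\<exists>\<Lambda>. \<Lambda> \<noteq> 0 \<and> solve c S q z = sc \<Lambda> (solve c S P z)"
proof -
  consider "z = a4" | "z = a3" | "z = a2" | "z = a1" using assms(2) by auto
  then show ?thesis
  proof cases
    case 1
    then show ?thesis using assms(3-6) unfolding solve_eq[OF assms(1)]
      by (intro exI[of _ "l a1 * l a2 * l a3"]) (auto simp: lin_def sc_def det2_def algebra_simps)
  next
    case 2
    then show ?thesis using assms(3-6) unfolding solve_eq[OF assms(1)]
      by (intro exI[of _ "l a1 * l a2 * l a4"]) (auto simp: lin_def sc_def det2_def algebra_simps)
  next
    case 3
    then show ?thesis using assms(3-6) unfolding solve_eq[OF assms(1)]
      by (intro exI[of _ "l a1 * l a3 * l a4"]) (auto simp: lin_def sc_def det2_def algebra_simps)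
  next
    case 4
    then show ?thesis using assms(3-6) unfolding solve_eq[OF assms(1)]
      by (intro exI[of _ "l a2 * l a3 * l a4"]) (auto simp: lin_def sc_def det2_def algebra_simps)
  qed
qed

lemma det2_lin: "det2 u (lin \<alpha> A \<beta> B) = \<alpha> * det2 u A + \<beta> * det2 u B"
  by (simp add: det2_def lin_def algebra_simps)

lemma solve_nz:
  assumes "sorted_list_of_set S = [a1,a2,a3,a4]" "z \<in> {a1,a2,a3,a4}" "a1 < a2" "a2 < a3" "a3 < a4"
    "\<forall>a\<in>{a1,a2,a3,a4}. \<forall>b\<in>{a1,a2,a3,a4}. a \<noteq> b \<longrightarrow> det2 (P a) (P b) \<noteq> 0"
  shows "solve c S P z \<noteq> (0,0)"
proof -
  have z0: "\<And>u. det2 u (0,0) = 0" by (simp add: det2_def)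
  consider "z = a4" | "z = a3" | "z = a2" | "z = a1" using assms(2) by auto
  then show ?thesis
  proof cases
    case 1
    have "det2 (P a2) (solve c S P z) = det2 (P a1) (P a2) * det2 (P a2) (P a3)"
      unfolding solve_eq[OF assms(1)] using 1 by (simp add: det2_lin det2_self)
    moreover have "\<dots> \<noteq> 0" using assms(3-6) by auto
    ultimately show ?thesis using z0 by metis
  next
    case 2
    have "det2 (P a1) (solve c S P z) = det2 (P a1) (P a2) * det2 (P a1) (P a4)"
      unfolding solve_eq[OF assms(1)] using 2 assms(5) by (simp add: det2_lin det2_self)
    moreover have "\<dots> \<noteq> 0" using assms(3-6) by auto
    ultimately show ?thesis using z0 by metis
  next
    case 3
    have "det2 (P a4) (solve c S P z) = det2 (P a3) (P a4) * det2 (P a4) (P a1)"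
      unfolding solve_eq[OF assms(1)] using 3 assms(3-5) by (simp add: det2_lin det2_self)
    moreover have "\<dots> \<noteq> 0" using assms(3-6) by auto
    ultimately show ?thesis using z0 by metis
  next
    case 4
    have "det2 (P a3) (solve c S P z) = det2 (P a3) (P a4) * det2 (P a3) (P a2)"
      unfolding solve_eq[OF assms(1)] using 4 assms(3-5) by (simp add: det2_lin det2_self)
    moreover have "\<dots> \<noteq> 0" using assms(3-6) by auto
    ultimately show ?thesis using z0 by metis
  qed
qed

definition zk :: "nat \<Rightarrow> (nat\<times>nat) list \<Rightarrow> nat \<Rightarrow> nat" where
  "zk n L k = Max (S_D n (L!k) - Kk n L k)"

definition base :: "nat \<Rightarrow> (nat\<times>nat) list \<Rightarrow> nat \<Rightarrow> complex \<times> complex" where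
  "base n L i = (case sorted_list_of_set (K0 n L) of [i1,i2,i3] \<Rightarrow>
     (if i = i1 then (1,0) else if i = i2 then (0,1) else if i = i3 then (1,1) else (0,0)) | _ \<Rightarrow> (0,0))"

primrec Qf :: "nat \<Rightarrow> (nat\<times>nat) list \<Rightarrow> (nat\<times>nat \<Rightarrow> complex) \<Rightarrow> nat \<Rightarrow> nat \<Rightarrow> complex \<times> complex" where
  "Qf n L y 0 = base n L"
| "Qf n L y (Suc k) = (Qf n L y k)(zk n L k := solve (y (L!k)) (S_D n (L!k)) (Qf n L y k) (zk n L k))"

lemma sorted3:
  assumes "finite S" "card S = 3"
  shows "\<exists>a1 a2 a3. sorted_list_of_set S = [a1,a2,a3] \<and> a1 < a2 \<and> a2 < a3 \<and> S = {a1,a2,a3}"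
proof -
  define xs where "xs = sorted_list_of_set S"
  have len: "length xs = 3" using assms by (simp add: xs_def)
  have "\<exists>a1 a2 a3. xs = [a1,a2,a3]" using len by (simp add: length_Suc_conv numeral_eq_Suc) blast
  then obtain a1 a2 a3 where xs: "xs = [a1,a2,a3]" by blast
  have "sorted_wrt (<) xs" unfolding xs_def by (rule strict_sorted_list_of_set)
  moreover have "set xs = S" using assms by (simp add: xs_def)
  ultimately show ?thesis using xs unfolding xs_def by auto
qed

lemma cr_set_local:
  assumes "finite S" "card S = 4" "\<forall>a\<in>S. p a = p' a"
  shows "cr_set p S = cr_set p' S"
proof -
  obtain a1 a2 a3 a4 where s: "sorted_list_of_set S = [a1,a2,a3,a4]" "S = {a1,a2,a3,a4}"
    using sorted4[OF assms(1,2)] by blast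
  show ?thesis unfolding cr_set_eq[OF s(1)] using assms(3) s(2) by (simp add: crn_def crd_def)
qed

context build
begin

abbreviation "m \<equiv> length L"

lemma LT: "k < m \<Longrightarrow> L!k \<in> T" using setL nth_mem by blast

lemma SLk: "k < m \<Longrightarrow> card (S_D n (L!k)) = 4 \<and> S_D n (L!k) \<subseteq> {1..n} \<and> finite (S_D n (L!k))"
  using S4 LT by (auto simp: S_D_def split: prod.splits)

lemma zk_prop:
  assumes "k < m"
  shows "zk n L k \<in> S_D n (L!k)" "zk n L k \<notin> Kk n L k" "S_D n (L!k) - {zk n L k} \<subseteq> Kk n L k"
    "Kk n L (Suc k) = insert (zk n L k) (Kk n L k)"
proof -
  obtain x where x: "S_D n (L!k) - Kk n L k = {x}" using step assms card_1_singletonE by blast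
  have z: "zk n L k = x" unfolding zk_def x by simp
  show "zk n L k \<in> S_D n (L!k)" "zk n L k \<notin> Kk n L k" "S_D n (L!k) - {zk n L k} \<subseteq> Kk n L k"
    using x z by auto
  show "Kk n L (Suc k) = insert (zk n L k) (Kk n L k)" using x z by (auto simp: Kk_Suc)
qed

lemma Kk_mono: "k \<le> k' \<Longrightarrow> Kk n L k \<subseteq> Kk n L k'"
  by (auto simp: Kk_def)

lemma Kk_range: "k \<le> m \<Longrightarrow> Kk n L k \<subseteq> {1..n}"
  using Kk_mono[of k m] full by auto

lemma Q_agree: "k \<le> k' \<Longrightarrow> k' \<le> m \<Longrightarrow> i \<in> Kk n L k \<Longrightarrow> Qf n L y k' i = Qf n L y k i"
proof (induction k')
  case 0 then show ?case by simp
next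
  case (Suc k')
  show ?case
  proof (cases "k = Suc k'")
    case False
    then have kk: "k \<le> k'" using Suc by simp
    have "i \<in> Kk n L k'" using Kk_mono[OF kk] Suc by auto
    then have "i \<noteq> zk n L k'" using zk_prop(2)[of k'] Suc by auto
    then show ?thesis using Suc kk by simp
  qed simp
qed

end

context build
begin

lemma K0_sorted: "\<exists>i1 i2 i3. sorted_list_of_set (K0 n L) = [i1,i2,i3] \<and> i1 < i2 \<and> i2 < i3 \<and> K0 n L = {i1,i2,i3}"
proof -
  have "finite (K0 n L)" using K0c(2) finite_subset by blast
  then show ?thesis using sorted3 K0c(1) by blast
qed

lemma S_sorted: "k < m \<Longrightarrow> \<exists>a1 a2 a3 a4. sorted_list_of_set (S_D n (L!k)) = [a1,a2,a3,a4] \<and> a1 < a2 \<and> a2 < a3 \<and> a3 < a4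
    \<and> S_D n (L!k) = {a1,a2,a3,a4}"
  using sorted4 SLk by blast

lemma uniq:
  assumes p: "p \<in> conf n" and cr: "\<forall>D\<in>T. cr_set p (S_D n D) = y D"
  shows "(p, Qf n L y m) \<in> mobius_equiv n"
proof -
  obtain i1 i2 i3 where K: "sorted_list_of_set (K0 n L) = [i1,i2,i3]" "i1 < i2" "i2 < i3" "K0 n L = {i1,i2,i3}"
    using K0_sorted by blast
  have ir: "i1 \<in> {1..n}" "i2 \<in> {1..n}" "i3 \<in> {1..n}" using K0c(2) K(4) by auto
  have pd: "\<And>i j. i \<in> {1..n} \<Longrightarrow> j \<in> {1..n} \<Longrightarrow> i \<noteq> j \<Longrightarrow> det2 (p i) (p j) \<noteq> 0"
    using p by (auto simp: conf_def)
  define d13 where "d13 = det2 (p i1) (p i3)"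
  define d23 where "d23 = det2 (p i2) (p i3)"
  define a where "a = - d13 * snd (p i2)"
  define b where "b = d13 * fst (p i2)"
  define c where "c = - d23 * snd (p i1)"
  define d where "d = d23 * fst (p i1)"
  define \<Delta> where "\<Delta> = a*d - b*c"
  have "\<Delta> = d13 * d23 * det2 (p i2) (p i1)"
    by (simp add: \<Delta>_def a_def b_def c_def d_def det2_def algebra_simps)
  then have \<Delta>nz: "\<Delta> \<noteq> 0" using pd ir K(2,3) unfolding d13_def d23_def by auto
  define p' where "p' = (\<lambda>i. mob a b c d (p i))"
  have p'd: "\<And>i j. det2 (p' i) (p' j) = \<Delta> * det2 (p i) (p j)" by (simp add: p'_def det2_mob \<Delta>_def)
  have p'nz: "\<And>i. i \<in> {1..n} \<Longrightarrow> p' i \<noteq> (0,0)"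
  proof -
    fix i assume i: "i \<in> {1..n}"
    obtain j where j: "j \<in> {1..n}" "j \<noteq> i" using n4 i by (metis atLeastAtMost_iff le_add1 le_trans nat_le_linear numeral_le_iff
        one_le_numeral plus_1_eq_Suc semiring_norm(69) Suc_n_not_le_n numeral_3_eq_3 eval_nat_numeral(3))
    have "det2 (p' i) (p' j) \<noteq> 0" using p'd pd[OF i j(1)] j \<Delta>nz by auto
    then show "p' i \<noteq> (0,0)" by (rule det2_nz)
  qed
  have b1: "det2 (p' i1) (1,0) = 0" "det2 (p' i2) (0,1) = 0" "det2 (p' i3) (1,1) = 0"
    by (simp_all add: p'_def mob_def det2_def a_def b_def c_def d_def d13_def d23_def algebra_simps)
  have inv: "\<forall>i\<in>Kk n L k. det2 (p' i) (Qf n L y k i) = 0 \<and> Qf n L y k i \<noteq> (0,0)" if "k \<le> m" for k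
    using that
  proof (induction k)
    case 0
    have "base n L i1 = (1,0)" "base n L i2 = (0,1)" "base n L i3 = (1,1)"
      using K by (auto simp: base_def)
    then show ?case using K(4) b1 by (auto simp: Kk_0)
  next
    case (Suc k)
    then have k: "k < m" by simp
    note IH = Suc.IH[OF less_imp_le[OF k]]
    define z where "z = zk n L k"
    note zp = zk_prop[OF k, folded z_def]
    obtain a1 a2 a3 a4 where S: "sorted_list_of_set (S_D n (L!k)) = [a1,a2,a3,a4]" "a1 < a2" "a2 < a3" "a3 < a4"
      "S_D n (L!k) = {a1,a2,a3,a4}" using S_sorted[OF k] by blast
    have Sr: "S_D n (L!k) \<subseteq> {1..n}" using SLk[OF k] by auto
    define cc where "cc = y (L!k)"
    have zS: "z \<in> {a1,a2,a3,a4}" using zp S by auto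
    show ?case
    proof
      fix i assume i: "i \<in> Kk n L (Suc k)"
      show "det2 (p' i) (Qf n L y (Suc k) i) = 0 \<and> Qf n L y (Suc k) i \<noteq> (0,0)"
      proof (cases "i = z")
        case False
        then have "i \<in> Kk n L k" using i zp(4) by auto
        then show ?thesis using IH False by (simp add: z_def)
      next
        case True
        have Qz: "Qf n L y (Suc k) i = solve cc (S_D n (L!k)) (Qf n L y k) z" using True by (simp add: z_def cc_def)
        have oth: "\<forall>a'\<in>{a1,a2,a3,a4}-{z}. \<exists>l. l \<noteq> 0 \<and> Qf n L y k a' = sc l (p' a')"
        proof
          fix a' assume a': "a' \<in> {a1,a2,a3,a4}-{z}"
          then have "a' \<in> Kk n L k" using zp(3) S(5) by auto
          moreover have "a' \<in> {1..n}" using a' Sr S(5) by auto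
          ultimately show "\<exists>l. l \<noteq> 0 \<and> Qf n L y k a' = sc l (p' a')"
            using IH par_ex_nz p'nz by blast
        qed
        then obtain l where l: "\<forall>a'\<in>{a1,a2,a3,a4}-{z}. l a' \<noteq> 0 \<and> Qf n L y k a' = sc (l a') (p' a')"
          by metis
        obtain \<Lambda> where \<Lambda>: "\<Lambda> \<noteq> 0" "solve cc (S_D n (L!k)) (Qf n L y k) z = sc \<Lambda> (solve cc (S_D n (L!k)) p' z)"
          using solve_scale[OF S(1) zS S(2-4) l] by blast
        have dist: "\<forall>a\<in>{a1,a2,a3,a4}. \<forall>b\<in>{a1,a2,a3,a4}. a \<noteq> b \<longrightarrow> det2 (p' a) (p' b) \<noteq> 0"
          using p'd pd Sr S(5) \<Delta>nz by auto
        have crd0: "crd p a1 a2 a3 a4 \<noteq> 0" using pd Sr S(2-5) by (auto simp: crd_def)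
        have "cr_set p (S_D n (L!k)) = cc" using cr LT[OF k] by (simp add: cc_def)
        then have "crn p a1 a2 a3 a4 = cc * crd p a1 a2 a3 a4" using crd0 cr_set_eq[OF S(1)] by (simp add: field_simps)
        then have "crn p' a1 a2 a3 a4 - cc * crd p' a1 a2 a3 a4 = 0"
          by (simp add: crn_def crd_def p'd algebra_simps)
        then have "det2 (solve cc (S_D n (L!k)) p' z) (p' z) = 0"
          using ident[OF S(1) zS S(2-4), of p' cc] by (auto split: if_splits)
        then have d0: "det2 (p' z) (solve cc (S_D n (L!k)) p' z) = 0" by (metis det2_anti neg_equal_0_iff_equal)
        have nz: "solve cc (S_D n (L!k)) p' z \<noteq> (0,0)" using solve_nz[OF S(1) zS S(2-4) dist] .
        show ?thesis unfolding Qz \<Lambda>(2) using True d0 \<Lambda>(1) nz by (simp add: det2_sc2 sc_nz)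
      qed
    qed
  qed
  have allQ: "\<forall>i\<in>{1..n}. det2 (p' i) (Qf n L y m i) = 0 \<and> Qf n L y m i \<noteq> (0,0)"
    using inv[of m] full by simp
  have "\<forall>i\<in>{1..n}. \<exists>l. l \<noteq> 0 \<and> Qf n L y m i = sc l (p' i)"
    using allQ par_ex_nz p'nz by blast
  then obtain lam where lam: "\<forall>i\<in>{1..n}. lam i \<noteq> 0 \<and> Qf n L y m i = sc (lam i) (p' i)" by metis
  have Qc: "Qf n L y m \<in> conf n"
    unfolding conf_def
  proof (intro CollectI conjI ballI impI)
    fix i assume "i \<in> {1..n}" then show "Qf n L y m i \<noteq> (0,0)" using allQ by auto
  next
    fix i j assume ij: "i \<in> {1..n}" "j \<in> {1..n}" "i \<noteq> j"
    then show "det2 (Qf n L y m i) (Qf n L y m j) \<noteq> 0"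
      using lam det2_sc p'd pd \<Delta>nz by auto
  qed
  have "\<forall>i\<in>{1..n}. lam i \<noteq> 0 \<and> Qf n L y m i = (lam i * (a * fst (p i) + b * snd (p i)), lam i * (c * fst (p i) + d * snd (p i)))"
    using lam by (auto simp: sc_def p'_def mob_def)
  then show ?thesis unfolding mobius_equiv_def using p Qc \<Delta>nz unfolding \<Delta>_def by blast
qed

end

context build
begin

lemma exist:
  assumes y: "y \<in> target T"
    and dets: "\<forall>i\<in>{1..n}. \<forall>j\<in>{1..n}. i < j \<longrightarrow> det2 (Qf n L y m i) (Qf n L y m j) \<noteq> 0"
  shows "Qf n L y m \<in> conf n" "piT n T (Qf n L y m) = y"
proof -
  define Q where "Q = Qf n L y m"
  have dQ: "\<And>i j. i\<in>{1..n} \<Longrightarrow> j\<in>{1..n} \<Longrightarrow> i \<noteq> j \<Longrightarrow> det2 (Q i) (Q j) \<noteq> 0"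
  proof -
    fix i j assume ij: "i\<in>{1..n}" "j\<in>{1..n}" "i \<noteq> j"
    show "det2 (Q i) (Q j) \<noteq> 0"
    proof (cases "i < j")
      case True then show ?thesis using dets ij by (simp add: Q_def)
    next
      case False then have "j < i" using ij by simp
      then show ?thesis using dets ij det2_anti[of "Q i" "Q j"] by (simp add: Q_def)
    qed
  qed
  show Qc: "Qf n L y m \<in> conf n"
    unfolding conf_def Q_def[symmetric]
  proof (intro CollectI conjI ballI impI)
    fix i assume i: "i \<in> {1..n}"
    obtain j where j: "j \<in> {1..n}" "j \<noteq> i" using n4 i by (metis atLeastAtMost_iff le_add1 le_trans nat_le_linear numeral_le_iff
        one_le_numeral plus_1_eq_Suc semiring_norm(69) Suc_n_not_le_n numeral_3_eq_3 eval_nat_numeral(3))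
    show "Q i \<noteq> (0,0)" using dQ[OF i j(1)] j det2_nz by auto
  next
    fix i j assume "i \<in> {1..n}" "j \<in> {1..n}" "i \<noteq> j" then show "det2 (Q i) (Q j) \<noteq> 0" by (rule dQ)
  qed
  show "piT n T (Qf n L y m) = y"
  proof
    fix D
    show "piT n T (Qf n L y m) D = y D"
    proof (cases "D \<in> T")
      case False
      then show ?thesis using y by (cases D) (simp add: piT_def target_def)
    next
      case True
      then obtain k where k: "k < m" "L!k = D" using setL by (metis in_set_conv_nth)
      define z where "z = zk n L k"
      note zp = zk_prop[OF k(1), folded z_def]
      obtain a1 a2 a3 a4 where S: "sorted_list_of_set (S_D n (L!k)) = [a1,a2,a3,a4]" "a1 < a2" "a2 < a3" "a3 < a4"
        "S_D n (L!k) = {a1,a2,a3,a4}" using S_sorted[OF k(1)] by blast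
      have Sr: "S_D n (L!k) \<subseteq> {1..n}" using SLk[OF k(1)] by auto
      define cc where "cc = y (L!k)"
      have zS: "z \<in> {a1,a2,a3,a4}" using zp S by auto
      define X where "X = Qf n L y (Suc k)"
      have SK: "S_D n (L!k) \<subseteq> Kk n L (Suc k)" by (simp add: Kk_Suc)
      have XQ: "\<forall>a\<in>S_D n (L!k). Q a = X a" unfolding Q_def X_def
        using Q_agree[of "Suc k" m] k SK by auto
      have Xz: "X z = solve cc (S_D n (L!k)) (Qf n L y k) z" by (simp add: X_def z_def cc_def)
      have "\<forall>a\<in>{a1,a2,a3,a4}-{z}. Qf n L y k a = X a" by (simp add: X_def z_def)
      then have "solve cc (S_D n (L!k)) (Qf n L y k) z = solve cc (S_D n (L!k)) X z"
        by (rule solve_local[OF S(1) zS S(2-4)])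
      then have "det2 (solve cc (S_D n (L!k)) X z) (X z) = 0" using Xz by (simp add: det2_self)
      then have e: "crn X a1 a2 a3 a4 = cc * crd X a1 a2 a3 a4"
        using ident[OF S(1) zS S(2-4), of X cc] by (auto split: if_splits)
      have r: "1 \<le> a1" "a4 \<le> n" using Sr S(5) by auto
      have "det2 (Q a1) (Q a3) \<noteq> 0" "det2 (Q a2) (Q a4) \<noteq> 0" using dQ r S(2-4) by auto
      then have "crd X a1 a2 a3 a4 \<noteq> 0" using XQ S(5) by (auto simp: crd_def)
      then have "cr_set X (S_D n (L!k)) = cc" using e cr_set_eq[OF S(1)] by simp
      moreover have "cr_set Q (S_D n (L!k)) = cr_set X (S_D n (L!k))"
        using cr_set_local SLk[OF k(1)] XQ by blast
      ultimately show ?thesis using True k by (simp add: piT_def Q_def cc_def)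
    qed
  qed
qed

end

lemma pf_c: "(\<lambda>y. c) \<in> polyfun" by (rule polyfun.pf_const)
lemma pf_v: "(\<lambda>y. y i) \<in> polyfun" by (rule polyfun.pf_var)
lemma pf_add: "f \<in> polyfun \<Longrightarrow> g \<in> polyfun \<Longrightarrow> (\<lambda>y. f y + g y) \<in> polyfun" by (rule polyfun.pf_add)
lemma pf_mult: "f \<in> polyfun \<Longrightarrow> g \<in> polyfun \<Longrightarrow> (\<lambda>y. f y * g y) \<in> polyfun" by (rule polyfun.pf_mult)
lemma pf_neg: "f \<in> polyfun \<Longrightarrow> (\<lambda>y. - f y) \<in> polyfun"
  using pf_mult[OF pf_c[of "-1"]] by simp
lemma pf_sub: "f \<in> polyfun \<Longrightarrow> g \<in> polyfun \<Longrightarrow> (\<lambda>y. f y - g y) \<in> polyfun"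
  using pf_add[OF _ pf_neg] by (simp add: algebra_simps)

definition pfv :: "(('i \<Rightarrow> complex) \<Rightarrow> complex \<times> complex) \<Rightarrow> bool" where
  "pfv F = ((\<lambda>y. fst (F y)) \<in> polyfun \<and> (\<lambda>y. snd (F y)) \<in> polyfun)"

lemma pfv_det2: "pfv F \<Longrightarrow> pfv G \<Longrightarrow> (\<lambda>y. det2 (F y) (G y)) \<in> polyfun"
  unfolding pfv_def det2_def by (intro pf_sub pf_mult) auto

lemma pfv_lin: "A \<in> polyfun \<Longrightarrow> pfv F \<Longrightarrow> B \<in> polyfun \<Longrightarrow> pfv G \<Longrightarrow> pfv (\<lambda>y. lin (A y) (F y) (B y) (G y))"
  unfolding pfv_def lin_def by (auto intro!: pf_add pf_mult)

lemma pfv_const: "pfv (\<lambda>y. c)" by (simp add: pfv_def pf_c)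

lemma pfv_if: "pfv F \<Longrightarrow> pfv G \<Longrightarrow> pfv (\<lambda>y. if P then F y else G y)"
  by (cases P) simp_all

lemma solve_cases: "(\<exists>a1 a2 a3 a4. sorted_list_of_set S = [a1,a2,a3,a4]) \<or> (\<forall>c q z. solve c S q z = (0,0))"
  by (auto simp: solve_def split: list.splits)

lemma pfv_solve:
  assumes "\<And>i. pfv (\<lambda>y. q y i)"
  shows "pfv (\<lambda>y. solve (y D) S (q y) z)"
proof -
  from solve_cases[of S] show ?thesis
  proof
    assume "\<exists>a1 a2 a3 a4. sorted_list_of_set S = [a1,a2,a3,a4]"
    then obtain a1 a2 a3 a4 where s: "sorted_list_of_set S = [a1,a2,a3,a4]" by blast
    have yv: "(\<lambda>y. y D) \<in> polyfun" by (rule pf_v)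
    have yn: "(\<lambda>y. - y D) \<in> polyfun" by (rule pf_neg[OF pf_v])
    note dd = pfv_det2[OF assms assms]
    show ?thesis unfolding solve_eq[OF s]
      by (intro pfv_if pfv_lin pf_mult yv yn dd assms)
  next
    assume "\<forall>c q z. solve c S q z = (0,0)"
    then show ?thesis by (simp add: pfv_const)
  qed
qed

lemma pfv_base: "pfv (\<lambda>y. base n L i)" by (rule pfv_const)

lemma pfv_Qf: "pfv (\<lambda>y. Qf n L y k i)"
proof (induction k arbitrary: i)
  case 0 then show ?case by (simp add: pfv_base)
next
  case (Suc k)
  show ?case
  proof (cases "i = zk n L k")
    case True
    then show ?thesis using pfv_solve[of "\<lambda>y i. Qf n L y k i", OF Suc.IH] by simp
  next
    case False
    then show ?thesis using Suc.IH by simp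
  qed
qed

lemma pf_prod: "finite A \<Longrightarrow> (\<forall>a\<in>A. g a \<in> polyfun) \<Longrightarrow> (\<lambda>y. \<Prod>a\<in>A. g a y) \<in> polyfun"
proof (induction A rule: finite_induct)
  case empty then show ?case by (simp add: pf_c)
next
  case (insert x F)
  then show ?case by (simp add: pf_mult)
qed

definition fgen :: "nat \<Rightarrow> (nat\<times>nat) list \<Rightarrow> (nat\<times>nat \<Rightarrow> complex) \<Rightarrow> complex" where
  "fgen n L y = (\<Prod>ij\<in>{(i,j). i\<in>{1..n} \<and> j\<in>{1..n} \<and> i<j}. det2 (Qf n L y (length L) (fst ij)) (Qf n L y (length L) (snd ij)))"

lemma fgen_pf: "fgen n L \<in> polyfun"
proof -
  have fin: "finite {(i,j). i\<in>{1..n} \<and> j\<in>{1..n} \<and> i<(j::nat)}"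
    by (rule finite_subset[of _ "{1..n} \<times> {1..n}"]) auto
  have "(\<lambda>y. fgen n L y) \<in> polyfun" unfolding fgen_def
    by (rule pf_prod[OF fin]) (auto intro: pfv_det2 pfv_Qf)
  then show ?thesis by simp
qed

lemma fgen_nz: "fgen n L y \<noteq> 0 \<longleftrightarrow> (\<forall>i\<in>{1..n}. \<forall>j\<in>{1..n}. i < j \<longrightarrow> det2 (Qf n L y (length L) i) (Qf n L y (length L) j) \<noteq> 0)"
proof -
  have fin: "finite {(i,j). i\<in>{1..n} \<and> j\<in>{1..n} \<and> i<(j::nat)}"
    by (rule finite_subset[of _ "{1..n} \<times> {1..n}"]) auto
  show ?thesis unfolding fgen_def prod_zero_iff[OF fin] by auto
qed

lemma line_poly:
  assumes "f \<in> polyfun"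
  shows "\<exists>P. \<forall>t. f (\<lambda>D. y1 D + t * (y2 D - y1 D)) = poly P t"
  using assms
proof (induction rule: polyfun.induct)
  case (pf_const c) then show ?case by (intro exI[of _ "[:c:]"]) simp
next
  case (pf_var i) then show ?case by (intro exI[of _ "[:y1 i, y2 i - y1 i:]"]) (simp add: algebra_simps)
next
  case (pf_add f g)
  then obtain P Q where "\<forall>t. f (\<lambda>D. y1 D + t * (y2 D - y1 D)) = poly P t" "\<forall>t. g (\<lambda>D. y1 D + t * (y2 D - y1 D)) = poly Q t" by blast
  then show ?case by (intro exI[of _ "P + Q"]) simp
next
  case (pf_mult f g)
  then obtain P Q where "\<forall>t. f (\<lambda>D. y1 D + t * (y2 D - y1 D)) = poly P t" "\<forall>t. g (\<lambda>D. y1 D + t * (y2 D - y1 D)) = poly Q t" by blast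
  then show ?case by (intro exI[of _ "P * Q"]) simp
qed

lemma gen_common:
  assumes T: "finite T" and f: "f \<in> polyfun" and g: "g \<in> polyfun"
    and y1: "y1 \<in> target T" "f y1 \<noteq> 0" and y2: "y2 \<in> target T" "g y2 \<noteq> 0"
  shows "\<exists>y\<in>target T. f y \<noteq> 0 \<and> g y \<noteq> 0"
proof -
  define l where "l = (\<lambda>t::complex. \<lambda>D. y1 D + t * (y2 D - y1 D))"
  obtain P where P: "\<forall>t. f (l t) = poly P t" using line_poly[OF f] unfolding l_def by blast
  obtain Q where Q: "\<forall>t. g (l t) = poly Q t" using line_poly[OF g] unfolding l_def by blast
  have l0: "l 0 = y1" and l1: "l 1 = y2" by (auto simp: l_def)
  have P0: "P \<noteq> 0" using P y1(2) l0 by (metis poly_0)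
  have Q0: "Q \<noteq> 0" using Q y2(2) l1 by (metis poly_0)
  define bad where "bad = {t. poly P t = 0} \<union> {t. poly Q t = 0} \<union>
     (\<Union>D\<in>T. {- y1 D / (y2 D - y1 D), (1 - y1 D) / (y2 D - y1 D)})"
  have "finite bad" unfolding bad_def using poly_roots_finite[OF P0] poly_roots_finite[OF Q0] T by auto
  then obtain t where t: "t \<notin> bad" using ex_new_if_finite[OF infinite_UNIV_char_0] by blast
  have "l t \<in> target T"
    unfolding target_def
  proof (intro CollectI conjI ballI allI impI)
    fix D assume D: "D \<in> T"
    have y1D: "y1 D \<noteq> 0" "y1 D \<noteq> 1" using y1(1) D by (auto simp: target_def)
    have nb: "t \<noteq> - y1 D / (y2 D - y1 D)" "t \<noteq> (1 - y1 D) / (y2 D - y1 D)" using t D by (auto simp: bad_def)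
    show "l t D \<noteq> 0"
    proof (cases "y2 D = y1 D")
      case True then show ?thesis using y1D by (simp add: l_def)
    next
      case False
      show ?thesis
      proof
        assume "l t D = 0"
        then have "t = - y1 D / (y2 D - y1 D)" using False by (simp add: l_def field_simps)
        with nb show False by simp
      qed
    qed
    show "l t D \<noteq> 1"
    proof (cases "y2 D = y1 D")
      case True then show ?thesis using y1D by (simp add: l_def)
    next
      case False
      show ?thesis
      proof
        assume "l t D = 1"
        then have "t = (1 - y1 D) / (y2 D - y1 D)" using False by (simp add: l_def field_simps)
        with nb show False by simp
      qed
    qed
  next
    fix D assume D: "D \<notin> T"
    then show "l t D = 0" using y1(1) y2(1) by (cases D) (auto simp: target_def l_def)
  qed
  moreover have "f (l t) \<noteq> 0" "g (l t) \<noteq> 0" using t P Q by (auto simp: bad_def)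
  ultimately show ?thesis by blast
qed

lemma det2_p0: "det2 (of_nat a, 1) (of_nat b, 1) = (of_nat a - of_nat b :: complex)"
  by (simp add: det2_def)

lemma p0_conf: "(\<lambda>i. (of_nat i :: complex, 1::complex)) \<in> conf n"
  by (auto simp: conf_def det2_p0)

context build
begin

lemma Tfin': "finite T" using setL by auto

lemma piT_cr: "piT n T p = y \<Longrightarrow> \<forall>D\<in>T. cr_set p (S_D n D) = y D"
  by (auto simp: piT_def)

definition p0 :: "nat \<Rightarrow> complex \<times> complex" where "p0 = (\<lambda>i. (of_nat i, 1))"

lemma y0_target: "piT n T p0 \<in> target T"
  unfolding target_def
proof (intro CollectI conjI ballI allI impI)
  fix D assume D: "D \<in> T"
  have "card (S_D n D) = 4" "S_D n D \<subseteq> {1..n}" using S4 D by auto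
  moreover have "finite (S_D n D)" by (cases D) (simp add: S_D_def)
  ultimately obtain a1 a2 a3 a4 where s: "sorted_list_of_set (S_D n D) = [a1,a2,a3,a4]" "a1 < a2" "a2 < a3" "a3 < a4"
    using sorted4 by blast
  have c: "cr_set p0 (S_D n D) = crn p0 a1 a2 a3 a4 / crd p0 a1 a2 a3 a4" by (rule cr_set_eq[OF s(1)])
  define A1 where "A1 = (of_nat a1 :: complex)"
  define A2 where "A2 = (of_nat a2 :: complex)"
  define A3 where "A3 = (of_nat a3 :: complex)"
  define A4 where "A4 = (of_nat a4 :: complex)"
  have ne: "A1 \<noteq> A2" "A1 \<noteq> A3" "A1 \<noteq> A4" "A2 \<noteq> A3" "A2 \<noteq> A4" "A3 \<noteq> A4"
    using s(2-4) unfolding A1_def A2_def A3_def A4_def by (auto simp: of_nat_eq_iff)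
  have cn: "crn p0 a1 a2 a3 a4 = (A1 - A2) * (A3 - A4)" "crd p0 a1 a2 a3 a4 = (A1 - A3) * (A2 - A4)"
    by (simp_all add: crn_def crd_def p0_def det2_p0 A1_def A2_def A3_def A4_def)
  have d: "(A1 - A3) * (A2 - A4) - (A1 - A2) * (A3 - A4) = (A1 - A4) * (A2 - A3)" by (simp add: algebra_simps)
  have "piT n T p0 D = (A1 - A2) * (A3 - A4) / ((A1 - A3) * (A2 - A4))" using D c cn by (simp add: piT_def)
  moreover have "(A1 - A2) * (A3 - A4) \<noteq> 0" "(A1 - A3) * (A2 - A4) \<noteq> 0" "(A1 - A4) * (A2 - A3) \<noteq> 0" using ne by auto
  ultimately show "piT n T p0 D \<noteq> 0" "piT n T p0 D \<noteq> 1" using d by (auto simp: field_simps)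
next
  fix D assume "D \<notin> T" then show "piT n T p0 D = 0" by (simp add: piT_def)
qed

lemma fgen_dom: "fgen n L (piT n T p0) \<noteq> 0"
proof -
  have "p0 \<in> conf n" unfolding p0_def by (rule p0_conf)
  then have "(p0, Qf n L (piT n T p0) m) \<in> mobius_equiv n" using uniq piT_cr by blast
  then have "Qf n L (piT n T p0) m \<in> conf n" by (auto simp: mobius_equiv_def)
  then show ?thesis unfolding fgen_nz by (auto simp: conf_def)
qed

lemma fiber1:
  assumes y: "y \<in> target T" "fgen n L y \<noteq> 0"
  shows "card (fiber n T y) = 1"
proof -
  define Q where "Q = Qf n L y m"
  have Q: "Q \<in> conf n" "piT n T Q = y" using exist[OF y(1)] y(2) unfolding fgen_nz Q_def by auto
  have eq: "equiv (conf n) (mobius_equiv n)" by (rule mob_equiv)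
  have "fiber n T y = {mobius_equiv n `` {Q}}"
  proof
    show "{mobius_equiv n `` {Q}} \<subseteq> fiber n T y"
    proof -
      have "mobius_equiv n `` {Q} \<in> M0 n" unfolding M0_def using Q(1) by (rule quotientI)
      moreover have "Q \<in> mobius_equiv n `` {Q}" using eq Q(1) by (auto simp: equiv_def refl_on_def)
      ultimately show ?thesis using Q(2) by (auto simp: fiber_def)
    qed
    show "fiber n T y \<subseteq> {mobius_equiv n `` {Q}}"
    proof
      fix C assume C: "C \<in> fiber n T y"
      then obtain p where p: "p \<in> C" "piT n T p = y" by (auto simp: fiber_def)
      from C have "C \<in> conf n // mobius_equiv n" by (simp add: fiber_def M0_def)
      then obtain x where x: "x \<in> conf n" "C = mobius_equiv n `` {x}" by (auto elim: quotientE)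
      have xp: "(x,p) \<in> mobius_equiv n" using p x by auto
      then have "p \<in> conf n" by (auto simp: mobius_equiv_def)
      then have pQ: "(p, Q) \<in> mobius_equiv n" using uniq piT_cr[OF p(2)] unfolding Q_def by blast
      have "C = mobius_equiv n `` {p}" using x(2) equiv_class_eq[OF eq xp] by simp
      also have "\<dots> = mobius_equiv n `` {Q}" using equiv_class_eq[OF eq pQ] .
      finally show "C \<in> {mobius_equiv n `` {Q}}" by simp
    qed
  qed
  then show ?thesis by simp
qed

lemma degree1: "degree_T n T = 1"
proof -
  have g1: "generically T (\<lambda>y. card (fiber n T y) = 1)"
    unfolding generically_def using fgen_pf y0_target fgen_dom fiber1 by blast
  show ?thesis unfolding degree_T_def
  proof (rule the_equality)
    show "generically T (\<lambda>y. card (fiber n T y) = 1)" by (rule g1)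
  next
    fix d assume "generically T (\<lambda>y. card (fiber n T y) = d)"
    then obtain g y2 where g: "g \<in> polyfun" "y2 \<in> target T" "g y2 \<noteq> 0"
      "\<forall>y\<in>target T. g y \<noteq> 0 \<longrightarrow> card (fiber n T y) = d" unfolding generically_def by blast
    obtain y where y: "y \<in> target T" "fgen n L y \<noteq> 0" "g y \<noteq> 0"
      using gen_common[OF Tfin' fgen_pf g(1) y0_target fgen_dom g(2,3)] by blast
    show "d = 1" using fiber1[OF y(1,2)] g(4) y by auto
  qed
qed

end

theorem corollary2p4:
  fixes n :: nat and T :: "(nat \<times> nat) set"
  assumes "n \<ge> 4"
    and "is_triangulation n T"
    and "\<forall>(a, b, c) \<in> triangles n T. is_side n a b \<or> is_side n b c \<or> is_side n a c"
  shows "degree_T n T = 1"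
proof -
  interpret tri3 n T by unfold_locales (use assms in auto)
  obtain L where "build n T L" using build_exists by blast
  then interpret build n T L .
  show ?thesis by (rule degree1)
qed

end
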